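(* Let $p$ be an odd prime, let $\epsilon>0$, and put $$\Delta=\frac{\epsilon^6}{2^{13}p^2}\exp\!\left(-16\,\epsilon^{-1}c_p\log p\right),$$ where $c_p$ is the constant described in the context. Suppose $f:\mathbb{F}_{p^n}\to[0,1]$ has the property that for every subspace $W$ of $\mathbb{F}_{p^n}$ of codimension at most $\Delta^{-2}$, $$\mathbb{E}(|f(m)-f_W(m)|)>\epsilon.$$ Then there exists a function $g:\mathbb{F}_{p^n}\to[0,1]$ such that $\mathbb{E}(g)=\mathbb{E}(f)$ and $\Lambda_3(g)<\Lambda_3(f)-\Delta$.
   Context: $\mathbb{F}_{p^n}$ is regarded as an $n$-dimensional vector space over $\mathbb{F}_p$; "subspace" means $\mathbb{F}_p$-subspace. For $g:\mathbb{F}_{p^n}\to\mathbb{C}$, $\mathbb{E}(g)=p^{-n}\sum_{m} g(m)$. For $f:\mathbb{F}_{p^n}\to[0,1]$, $\Lambda_3(f)=p^{-2n}\sum_{m,d} f(m)f(m+d)f(m+2d)$, and for a subspace $W$, $f_W(m)=|W|^{-1}\sum_{w\in W} f(m+w)$. The constant $c_p>0$ depends only on $p$ and is one for which Meshulam's theorem holds: for every $n$, every $S\subseteq\mathbb{F}_{p^n}$ with $|S|\ge c_p p^n/n$ contains a non-trivial three-term arithmetic progression $a,a+d,a+2d$ with $d\neq0$. *)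

theory Defs
  imports Complex_Main "HOL-Computational_Algebra.Primes"
begin

text \<open>Model of F_(p^n) as an n-dimensional F_p vector space: coordinate vectors
  v :: nat => int with v i in {0..<p} for i < n and v i = 0 for i >= n,
  with coordinatewise addition and scalar multiplication modulo p.\<close>

definition vecs :: "nat \<Rightarrow> nat \<Rightarrow> (nat \<Rightarrow> int) set" where
  "vecs p n = {v. (\<forall>i<n. 0 \<le> v i \<and> v i < int p) \<and> (\<forall>i\<ge>n. v i = 0)}"

definition vzero :: "nat \<Rightarrow> int" where
  "vzero = (\<lambda>_. 0)"

definition vadd :: "nat \<Rightarrow> (nat \<Rightarrow> int) \<Rightarrow> (nat \<Rightarrow> int) \<Rightarrow> (nat \<Rightarrow> int)" where
  "vadd p u v = (\<lambda>i. (u i + v i) mod int p)"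

definition vscale :: "nat \<Rightarrow> int \<Rightarrow> (nat \<Rightarrow> int) \<Rightarrow> (nat \<Rightarrow> int)" where
  "vscale p c v = (\<lambda>i. (c * v i) mod int p)"

definition is_subspace :: "nat \<Rightarrow> nat \<Rightarrow> (nat \<Rightarrow> int) set \<Rightarrow> bool" where
  "is_subspace p n W \<longleftrightarrow> W \<subseteq> vecs p n \<and> vzero \<in> W \<and>
     (\<forall>u\<in>W. \<forall>v\<in>W. vadd p u v \<in> W) \<and>
     (\<forall>c\<in>{0..<int p}. \<forall>v\<in>W. vscale p c v \<in> W)"

definition codim :: "nat \<Rightarrow> nat \<Rightarrow> (nat \<Rightarrow> int) set \<Rightarrow> nat" where
  "codim p n W = n - (THE d. card W = p ^ d)"

definition expect :: "nat \<Rightarrow> nat \<Rightarrow> ((nat \<Rightarrow> int) \<Rightarrow> real) \<Rightarrow> real" where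
  "expect p n g = (\<Sum>m\<in>vecs p n. g m) / real p ^ n"

definition Lambda3 :: "nat \<Rightarrow> nat \<Rightarrow> ((nat \<Rightarrow> int) \<Rightarrow> real) \<Rightarrow> real" where
  "Lambda3 p n f = (\<Sum>m\<in>vecs p n. \<Sum>d\<in>vecs p n.
      f m * f (vadd p m d) * f (vadd p m (vadd p d d))) / real p ^ (2 * n)"

definition favg :: "nat \<Rightarrow> (nat \<Rightarrow> int) set \<Rightarrow> ((nat \<Rightarrow> int) \<Rightarrow> real) \<Rightarrow> (nat \<Rightarrow> int) \<Rightarrow> real" where
  "favg p W f m = (\<Sum>w\<in>W. f (vadd p m w)) / real (card W)"

text \<open>Meshulam's theorem holds with constant c (for every n >= 1).\<close>
definition meshulam_const :: "nat \<Rightarrow> real \<Rightarrow> bool" where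
  "meshulam_const p c \<longleftrightarrow> (\<forall>n\<ge>1. \<forall>S\<subseteq>vecs p n.
     real (card S) \<ge> c * real p ^ n / real n \<longrightarrow>
     (\<exists>a\<in>S. \<exists>d\<in>vecs p n. d \<noteq> vzero \<and> vadd p a d \<in> S \<and> vadd p a (vadd p d d) \<in> S))"

end

theory Submission
  imports Defs "HOL-Library.FuncSet"
begin

locale oddp =
  fixes p :: nat
  assumes prime_p: "prime p" and odd_p: "odd p"
begin

lemma p_gt1: "p > 1" using prime_p prime_gt_1_nat by blast
lemma p_ge3: "p \<ge> 3" using p_gt1 odd_p by presburger
lemma p_pos: "int p > 0" using p_gt1 by simp
lemma prime_int: "prime (int p)" using prime_p by simp

lemma vecs_mod: "x \<in> vecs p n \<Longrightarrow> x i mod int p = x i"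
  unfolding vecs_def
  by (cases "i < n") auto

lemma vecs_out: "x \<in> vecs p n \<Longrightarrow> i \<ge> n \<Longrightarrow> x i = 0"
  unfolding vecs_def by auto

lemma vecs_bounds: "x \<in> vecs p n \<Longrightarrow> 0 \<le> x i \<and> x i < int p"
  unfolding vecs_def using p_pos by (cases "i < n") auto

lemma vecs_eqI: "x \<in> vecs p n \<Longrightarrow> y \<in> vecs p n \<Longrightarrow> (\<And>i. i < n \<Longrightarrow> x i mod int p = y i mod int p) \<Longrightarrow> x = y"
proof (rule ext)
  fix i assume x: "x \<in> vecs p n" and y: "y \<in> vecs p n" and h: "\<And>i. i < n \<Longrightarrow> x i mod int p = y i mod int p"
  show "x i = y i"
  proof (cases "i < n")
    case True then show ?thesis using h[OF True] vecs_mod[OF x] vecs_mod[OF y] by simp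
  next
    case False then show ?thesis using vecs_out[OF x] vecs_out[OF y] by simp
  qed
qed

lemma vecsI: "(\<And>i. i \<ge> n \<Longrightarrow> x i = 0) \<Longrightarrow> (\<lambda>i. x i mod int p) \<in> vecs p n"
  unfolding vecs_def using p_pos by auto

lemma vadd_in: "(\<And>i. i \<ge> n \<Longrightarrow> x i = 0) \<Longrightarrow> (\<And>i. i \<ge> n \<Longrightarrow> y i = 0) \<Longrightarrow> vadd p x y \<in> vecs p n"
  unfolding vadd_def using vecsI[of n "\<lambda>i. x i + y i"] by auto

lemma vadd_vecs[simp]: "x \<in> vecs p n \<Longrightarrow> y \<in> vecs p n \<Longrightarrow> vadd p x y \<in> vecs p n"
  by (rule vadd_in) (auto simp: vecs_out)

lemma vscale_vecs[simp]: "x \<in> vecs p n \<Longrightarrow> vscale p c x \<in> vecs p n"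
  unfolding vscale_def using vecsI[of n "\<lambda>i. c * x i"] by (auto simp: vecs_out)

lemma vzero_vecs[simp]: "vzero \<in> vecs p n"
  unfolding vecs_def vzero_def using p_pos by auto

lemma finite_vecs[simp]: "finite (vecs p n)"
proof -
  have "vecs p n \<subseteq> (\<lambda>g i. if i < n then g i else 0) ` ({..<n} \<rightarrow>\<^sub>E {0..<int p})"
  proof
    fix x assume x: "x \<in> vecs p n"
    define g where "g = (\<lambda>i. if i < n then x i else undefined)"
    have "g \<in> {..<n} \<rightarrow>\<^sub>E {0..<int p}" using x unfolding g_def vecs_def PiE_def extensional_def by auto
    moreover have "x = (\<lambda>i. if i < n then g i else 0)" using x unfolding g_def vecs_def by auto
    ultimately show "x \<in> (\<lambda>g i. if i < n then g i else 0) ` ({..<n} \<rightarrow>\<^sub>E {0..<int p})" by blast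
  qed
  moreover have "finite ({..<n} \<rightarrow>\<^sub>E {0..<int p})" by (rule finite_PiE) auto
  ultimately show ?thesis using finite_surj by blast
qed

lemma card_vecs: "card (vecs p n) = p ^ n"
proof -
  have bij: "bij_betw (\<lambda>x. restrict x {..<n}) (vecs p n) ({..<n} \<rightarrow>\<^sub>E {0..<int p})"
  proof (rule bij_betw_byWitness[where f' = "\<lambda>g i. if i < n then g i else 0"])
    show "\<forall>a\<in>vecs p n. (\<lambda>i. if i < n then restrict a {..<n} i else 0) = a"
      by (auto simp: vecs_def fun_eq_iff)
    show "\<forall>a'\<in>{..<n} \<rightarrow>\<^sub>E {0..<int p}. restrict (\<lambda>i. if i < n then a' i else 0) {..<n} = a'"
      by (auto simp: fun_eq_iff PiE_def extensional_def)
    show "(\<lambda>x. restrict x {..<n}) ` vecs p n \<subseteq> {..<n} \<rightarrow>\<^sub>E {0..<int p}"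
    proof (rule image_subsetI)
      fix x assume "x \<in> vecs p n"
      then show "restrict x {..<n} \<in> {..<n} \<rightarrow>\<^sub>E {0..<int p}"
        unfolding restrict_PiE_iff vecs_def by auto
    qed
    show "(\<lambda>g i. if i < n then g i else 0) ` ({..<n} \<rightarrow>\<^sub>E {0..<int p}) \<subseteq> vecs p n"
    proof (rule image_subsetI)
      fix g assume g: "g \<in> {..<n} \<rightarrow>\<^sub>E {0..<int p}"
      have "\<And>i. i < n \<Longrightarrow> g i \<in> {0..<int p}" using PiE_mem[OF g] by blast
      then show "(\<lambda>i. if i < n then g i else 0) \<in> vecs p n" unfolding vecs_def by auto
    qed
  qed
  have "card (vecs p n) = card ({..<n} \<rightarrow>\<^sub>E {0..<int p})" using bij_betw_same_card[OF bij] by simp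
  also have "\<dots> = p ^ n" by (simp add: card_PiE)
  finally show ?thesis .
qed

lemma vadd_zero[simp]: "x \<in> vecs p n \<Longrightarrow> vadd p x vzero = x"
  by (rule ext) (simp add: vadd_def vzero_def vecs_mod)
lemma vzero_add[simp]: "x \<in> vecs p n \<Longrightarrow> vadd p vzero x = x"
  by (rule ext) (simp add: vadd_def vzero_def vecs_mod)

lemma vadd_comm: "vadd p x y = vadd p y x"
  by (rule ext) (simp add: vadd_def add.commute)

lemma vadd_assoc: "vadd p (vadd p x y) z = vadd p x (vadd p y z)"
  by (rule ext) (simp add: vadd_def mod_simps add.assoc)

lemma vadd_inj: assumes "z \<in> vecs p n" shows "inj_on (vadd p z) (vecs p n)"
proof (rule inj_onI)
  fix x y assume x: "x \<in> vecs p n" and y: "y \<in> vecs p n" and e: "vadd p z x = vadd p z y"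
  show "x = y"
  proof (rule vecs_eqI[OF x y])
    fix i
    have "(z i + x i) mod int p = (z i + y i) mod int p" using fun_cong[OF e, of i] by (simp add: vadd_def)
    then have "int p dvd (z i + x i) - (z i + y i)" by (simp add: mod_eq_dvd_iff)
    then show "x i mod int p = y i mod int p" by (simp add: mod_eq_dvd_iff)
  qed
qed

lemma sum_bij_self:
  assumes "finite X" "\<And>x. x \<in> X \<Longrightarrow> h x \<in> X" "inj_on h X"
  shows "(\<Sum>x\<in>X. g (h x)) = (\<Sum>x\<in>X. g x)"
proof -
  have im: "h ` X = X" using endo_inj_surj[OF assms(1) _ assms(3)] assms(2) by blast
  have "(\<Sum>x\<in>X. g (h x)) = sum g (h ` X)" using sum.reindex[OF assms(3), of g] by simp
  then show ?thesis using im by simp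
qed

lemma sum_shift: "z \<in> vecs p n \<Longrightarrow> (\<Sum>x\<in>vecs p n. g (vadd p z x)) = (\<Sum>x\<in>vecs p n. g x)"
  by (rule sum_bij_self) (auto intro: vadd_inj)

lemma vscale_inj: assumes "k mod int p \<noteq> 0" shows "inj_on (vscale p k) (vecs p n)"
proof (rule inj_onI)
  fix x y assume x: "x \<in> vecs p n" and y: "y \<in> vecs p n" and e: "vscale p k x = vscale p k y"
  show "x = y"
  proof (rule vecs_eqI[OF x y])
    fix i
    have "(k * x i) mod int p = (k * y i) mod int p" using fun_cong[OF e, of i] by (simp add: vscale_def)
    then have "int p dvd k * (x i - y i)" by (simp add: mod_eq_dvd_iff right_diff_distrib)
    then have "int p dvd k \<or> int p dvd (x i - y i)" using prime_int prime_dvd_mult_iff by blast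
    then have "int p dvd (x i - y i)" using assms by (auto simp: dvd_eq_mod_eq_0)
    then show "x i mod int p = y i mod int p" by (simp add: mod_eq_dvd_iff)
  qed
qed

lemma sum_scale: "k mod int p \<noteq> 0 \<Longrightarrow> (\<Sum>x\<in>vecs p n. g (vscale p k x)) = (\<Sum>x\<in>vecs p n. g x)"
  by (rule sum_bij_self) (auto intro: vscale_inj)

end

context oddp begin

definition vneg :: "(nat \<Rightarrow> int) \<Rightarrow> (nat \<Rightarrow> int)" where "vneg x = vscale p (-1) x"

lemma vneg_vecs[simp]: "x \<in> vecs p n \<Longrightarrow> vneg x \<in> vecs p n" unfolding vneg_def by simp

lemma vadd_neg[simp]: "vadd p x (vneg x) = vzero"
  by (rule ext) (simp add: vadd_def vneg_def vscale_def vzero_def mod_simps)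

lemma vscale_add: "vscale p k (vadd p x y) = vadd p (vscale p k x) (vscale p k y)"
  by (rule ext) (simp add: vadd_def vscale_def mod_simps algebra_simps)

lemma vscale_scale: "vscale p a (vscale p b x) = vscale p (a * b) x"
  by (rule ext) (simp add: vscale_def mod_simps algebra_simps)

lemma vscale_one[simp]: "x \<in> vecs p n \<Longrightarrow> vscale p 1 x = x"
  by (rule ext) (simp add: vscale_def vecs_mod)

lemma vscale_zero[simp]: "vscale p 0 x = vzero"
  by (rule ext) (simp add: vscale_def vzero_def)

lemma vscale_mod: "vscale p (k mod int p) x = vscale p k x"
  by (rule ext) (simp add: vscale_def mod_simps)

lemma vscale_distrib: "vadd p (vscale p a x) (vscale p b x) = vscale p (a + b) x"
  by (rule ext) (simp add: vadd_def vscale_def mod_simps algebra_simps)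

lemma vadd_scale_self: "x \<in> vecs p n \<Longrightarrow> vadd p x (vscale p b x) = vscale p (1 + b) x"
  using vscale_distrib[of 1 x b] by simp

lemma vadd_left_comm: "vadd p x (vadd p y z) = vadd p y (vadd p x z)"
  by (rule ext) (simp add: vadd_def mod_simps algebra_simps)

lemma vadd_cancel: "x \<in> vecs p n \<Longrightarrow> y \<in> vecs p n \<Longrightarrow> z \<in> vecs p n \<Longrightarrow> vadd p z x = vadd p z y \<Longrightarrow> x = y"
  using vadd_inj[of z n] by (auto dest: inj_onD)

lemma vadd_eq_zero_iff: "x \<in> vecs p n \<Longrightarrow> y \<in> vecs p n \<Longrightarrow> vadd p x (vneg y) = vzero \<longleftrightarrow> x = y"
proof
  assume x: "x \<in> vecs p n" and y: "y \<in> vecs p n" and e: "vadd p x (vneg y) = vzero"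
  have "vadd p y (vadd p x (vneg y)) = vadd p y vzero" using e by simp
  also have "\<dots> = y" using y by simp
  also have "vadd p y (vadd p x (vneg y)) = vadd p x (vadd p y (vneg y))" by (rule vadd_left_comm)
  also have "\<dots> = x" using x by simp
  finally show "x = y" .
qed simp

lemma subsp_sub: "is_subspace p n W \<Longrightarrow> W \<subseteq> vecs p n" unfolding is_subspace_def by auto
lemma subsp_in: "is_subspace p n W \<Longrightarrow> w \<in> W \<Longrightarrow> w \<in> vecs p n" unfolding is_subspace_def by auto
lemma subsp_finite: assumes "is_subspace p n W" shows "finite W"
  using finite_subset[OF subsp_sub[OF assms] finite_vecs] .
lemma subsp_zero: "is_subspace p n W \<Longrightarrow> vzero \<in> W" unfolding is_subspace_def by auto
lemma subsp_add: "is_subspace p n W \<Longrightarrow> u \<in> W \<Longrightarrow> v \<in> W \<Longrightarrow> vadd p u v \<in> W" unfolding is_subspace_def by auto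
lemma subsp_scale: assumes "is_subspace p n W" "v \<in> W" shows "vscale p k v \<in> W"
proof -
  have "k mod int p \<in> {0..<int p}" using p_pos by simp
  then have "vscale p (k mod int p) v \<in> W" using assms unfolding is_subspace_def by blast
  then show ?thesis by (simp add: vscale_mod)
qed
lemma subsp_card_pos: assumes "is_subspace p n W" shows "card W > 0"
proof -
  have "W \<noteq> {}" using subsp_zero[OF assms] by auto
  then show ?thesis using subsp_finite[OF assms] by (simp add: card_gt_0_iff)
qed

lemma sum_shift_W: assumes W: "is_subspace p n W" and z: "z \<in> W"
  shows "(\<Sum>w\<in>W. g (vadd p z w)) = (\<Sum>w\<in>W. g w)"
proof (rule sum_bij_self)
  show "finite W" using subsp_finite[OF W] .
  show "\<And>x. x \<in> W \<Longrightarrow> vadd p z x \<in> W" using subsp_add[OF W z] by blast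
  show "inj_on (vadd p z) W" using inj_on_subset[OF vadd_inj[OF subsp_in[OF W z]] subsp_sub[OF W]] .
qed

lemma sum_scale_W: assumes W: "is_subspace p n W" and k: "k mod int p \<noteq> 0"
  shows "(\<Sum>w\<in>W. g (vscale p k w)) = (\<Sum>w\<in>W. g w)"
proof (rule sum_bij_self)
  show "finite W" using subsp_finite[OF W] .
  show "\<And>x. x \<in> W \<Longrightarrow> vscale p k x \<in> W" using subsp_scale[OF W] by blast
  show "inj_on (vscale p k) W" using inj_on_subset[OF vscale_inj[OF k] subsp_sub[OF W]] .
qed

lemma two_unit: "(2::int) mod int p \<noteq> 0"
proof
  assume "2 mod int p = 0"
  then have "int p dvd 2" by auto
  then have "p dvd 2" by presburger
  then show False using p_ge3 by (simp add: nat_dvd_not_less)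
qed

lemma neg_unit: "(k::int) mod int p \<noteq> 0 \<Longrightarrow> (- k) mod int p \<noteq> 0"
  by (simp add: mod_eq_0_iff_dvd)

lemma neg_one_unit: "(-1::int) mod int p \<noteq> 0"
  using neg_unit[of 1] p_gt1 by simp

lemma neg_two_unit: "(-2::int) mod int p \<noteq> 0"
  using neg_unit[OF two_unit] by simp

end

context oddp begin

definition e :: "int \<Rightarrow> complex" where "e t = cis (2 * pi * of_int t / real p)"
definition dot :: "nat \<Rightarrow> (nat \<Rightarrow> int) \<Rightarrow> (nat \<Rightarrow> int) \<Rightarrow> int" where
  "dot n a b = (\<Sum>i<n. a i * b i)"
definition chi :: "nat \<Rightarrow> (nat \<Rightarrow> int) \<Rightarrow> (nat \<Rightarrow> int) \<Rightarrow> complex" where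
  "chi n a b = e (dot n a b)"

lemma e_add: "e (a + b) = e a * e b"
  unfolding e_def by (simp add: cis_mult add_divide_distrib distrib_left)

lemma e_zero[simp]: "e 0 = 1" unfolding e_def by simp

lemma e_mult_p: "e (int p * k) = 1"
proof -
  have "2 * pi * of_int (int p * k) / real p = 2 * pi * of_int k" using p_gt1 by simp
  then show ?thesis unfolding e_def by simp
qed

lemma e_mod: "e (a mod int p) = e a"
proof -
  have "a = a mod int p + int p * (a div int p)" by simp
  then have "e a = e (a mod int p) * e (int p * (a div int p))" by (metis e_add)
  then show ?thesis by (simp add: e_mult_p)
qed

lemma e_cong: "a mod int p = b mod int p \<Longrightarrow> e a = e b"
  by (metis e_mod)

lemma e_neg: "e (- a) = cnj (e a)"
  unfolding e_def by (simp add: cis_cnj)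

lemma e_norm[simp]: "cmod (e a) = 1" unfolding e_def by simp

lemma e_one_iff: "e a = 1 \<longleftrightarrow> a mod int p = 0"
proof
  assume h: "e a = 1"
  then have "cos (2 * pi * of_int a / real p) = 1" unfolding e_def
    by (metis Re_complex_of_real cis.sel(1) of_real_1)
  then obtain k :: int where k: "2 * pi * of_int a / real p = of_int k * 2 * pi"
    using cos_one_2pi_int by blast
  then have "real_of_int a = of_int k * real p" using p_gt1 by (simp add: field_simps)
  then have "a = k * int p" by (metis of_int_eq_iff of_int_mult of_int_of_nat_eq)
  then show "a mod int p = 0" by simp
next
  assume "a mod int p = 0"
  then show "e a = 1" using e_mod[of a] by simp
qed

lemma dot_vadd_mod: "dot n a (vadd p x y) mod int p = (dot n a x + dot n a y) mod int p"
proof -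
  have "dot n a (vadd p x y) mod int p = (\<Sum>i<n. a i * ((x i + y i) mod int p)) mod int p"
    unfolding dot_def vadd_def by simp
  also have "\<dots> = (\<Sum>i<n. (a i * ((x i + y i) mod int p)) mod int p) mod int p"
    by (simp add: mod_sum_eq)
  also have "\<dots> = (\<Sum>i<n. (a i * (x i + y i)) mod int p) mod int p"
    by (simp add: mod_mult_right_eq)
  also have "\<dots> = (\<Sum>i<n. a i * (x i + y i)) mod int p"
    by (simp add: mod_sum_eq)
  also have "\<dots> = (dot n a x + dot n a y) mod int p"
    unfolding dot_def by (simp add: distrib_left sum.distrib)
  finally show ?thesis .
qed

lemma dot_vscale_mod: "dot n a (vscale p k x) mod int p = (k * dot n a x) mod int p"
proof -
  have "dot n a (vscale p k x) mod int p = (\<Sum>i<n. a i * ((k * x i) mod int p)) mod int p"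
    unfolding dot_def vscale_def by simp
  also have "\<dots> = (\<Sum>i<n. (a i * ((k * x i) mod int p)) mod int p) mod int p"
    by (simp add: mod_sum_eq)
  also have "\<dots> = (\<Sum>i<n. (a i * (k * x i)) mod int p) mod int p"
    by (simp add: mod_mult_right_eq)
  also have "\<dots> = (\<Sum>i<n. a i * (k * x i)) mod int p"
    by (simp add: mod_sum_eq)
  also have "\<dots> = (k * dot n a x) mod int p"
    unfolding dot_def by (simp add: sum_distrib_left algebra_simps)
  finally show ?thesis .
qed

lemma dot_sym: "dot n a b = dot n b a" unfolding dot_def by (simp add: mult.commute)

lemma chi_add: "chi n a (vadd p x y) = chi n a x * chi n a y"
  unfolding chi_def using e_cong[OF dot_vadd_mod] e_add by simp

lemma chi_scale: "chi n a (vscale p k x) = e (k * dot n a x)"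
  unfolding chi_def using e_cong[OF dot_vscale_mod] by simp

lemma chi_scale': "chi n (vscale p k a) x = e (k * dot n a x)"
  using chi_scale[of n x k a] unfolding chi_def by (simp add: dot_sym)

lemma chi_sym: "chi n a b = chi n b a" unfolding chi_def by (simp add: dot_sym)

lemma chi_zero[simp]: "chi n a vzero = 1" unfolding chi_def dot_def vzero_def by simp
lemma chi_zero'[simp]: "chi n vzero a = 1" unfolding chi_def dot_def vzero_def by simp

lemma chi_neg: "chi n a (vneg x) = cnj (chi n a x)"
  unfolding vneg_def using chi_scale[of n a "-1" x] by (simp add: e_neg chi_def)

lemma chi_norm[simp]: "cmod (chi n a x) = 1" unfolding chi_def by simp

lemma chi_cnj_mult: "chi n a x * cnj (chi n a x) = 1"
  unfolding chi_def e_def by (simp add: cis_cnj cis_mult)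

lemma unit_vec: assumes "j < n" shows "(\<lambda>i. if i = j then 1 else 0) \<in> vecs p n"
  unfolding vecs_def using assms p_gt1 by auto

lemma orth: assumes a: "a \<in> vecs p n"
  shows "(\<Sum>x\<in>vecs p n. chi n a x) = (if a = vzero then of_nat (p ^ n) else 0)"
proof (cases "a = vzero")
  case True then show ?thesis by (simp add: card_vecs)
next
  case False
  have "\<exists>j<n. a j \<noteq> 0"
  proof (rule ccontr)
    assume h: "\<not> (\<exists>j<n. a j \<noteq> 0)"
    have "a = vzero"
    proof (rule ext)
      fix i show "a i = vzero i" using h vecs_out[OF a, of i] by (cases "i < n") (auto simp: vzero_def)
    qed
    then show False using False by simp
  qed
  then obtain j where j: "j < n" "a j \<noteq> 0" by blast
  define u where "u = (\<lambda>i. if i = j then 1 else 0::int)"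
  have u: "u \<in> vecs p n" unfolding u_def using unit_vec[OF j(1)] .
  have du: "dot n a u = a j" unfolding dot_def u_def using j(1) by (simp add: if_distrib cong: if_cong)
  have "a j mod int p \<noteq> 0" using j(2) vecs_mod[OF a, of j] by simp
  then have ne: "chi n a u \<noteq> 1" unfolding chi_def du e_one_iff .
  have "(\<Sum>x\<in>vecs p n. chi n a x) = (\<Sum>x\<in>vecs p n. chi n a (vadd p u x))"
    using sum_shift[OF u, of "chi n a"] by simp
  also have "\<dots> = chi n a u * (\<Sum>x\<in>vecs p n. chi n a x)"
    by (simp add: chi_add sum_distrib_left)
  finally have "(1 - chi n a u) * (\<Sum>x\<in>vecs p n. chi n a x) = 0" by (simp add: algebra_simps)
  then show ?thesis using ne False by simp
qed

lemma orth_W: assumes W: "is_subspace p n W"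
  shows "(\<Sum>w\<in>W. chi n a w) = (if (\<forall>w\<in>W. chi n a w = 1) then of_nat (card W) else 0)"
proof (cases "\<forall>w\<in>W. chi n a w = 1")
  case True then show ?thesis by simp
next
  case False
  then obtain u where u: "u \<in> W" "chi n a u \<noteq> 1" by blast
  have "(\<Sum>w\<in>W. chi n a w) = (\<Sum>w\<in>W. chi n a (vadd p u w))"
    using sum_shift_W[OF W u(1), of "chi n a"] by simp
  also have "\<dots> = chi n a u * (\<Sum>w\<in>W. chi n a w)"
    by (simp add: chi_add sum_distrib_left)
  finally have "(1 - chi n a u) * (\<Sum>w\<in>W. chi n a w) = 0" by (simp add: algebra_simps)
  then show ?thesis using u False by auto
qed

lemma orth_sym: assumes x: "x \<in> vecs p n"
  shows "(\<Sum>a\<in>vecs p n. chi n a x) = (if x = vzero then of_nat (p ^ n) else 0)"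
  using orth[OF x] by (simp add: chi_sym)

end

context oddp begin

definition FT :: "nat \<Rightarrow> ((nat \<Rightarrow> int) \<Rightarrow> real) \<Rightarrow> (nat \<Rightarrow> int) \<Rightarrow> complex" where
  "FT n f a = (\<Sum>x\<in>vecs p n. complex_of_real (f x) * chi n a x) / of_nat (p ^ n)"

lemma Np_pos: "(p ^ n :: nat) > 0" using p_gt1 by simp

lemma vadd_zero_iff: "w \<in> vecs p n \<Longrightarrow> z \<in> vecs p n \<Longrightarrow> vadd p w z = vzero \<longleftrightarrow> z = vneg w"
proof
  assume w: "w \<in> vecs p n" and z: "z \<in> vecs p n" and h: "vadd p w z = vzero"
  have "z = vadd p (vadd p w (vneg w)) z" using z by simp
  also have "\<dots> = vadd p (vneg w) (vadd p w z)"
    by (rule ext) (simp only: vadd_def vneg_def vscale_def, simp add: mod_simps, (simp add: algebra_simps)?)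
  also have "\<dots> = vneg w" using h vadd_zero[OF vneg_vecs[OF w]] by simp
  finally show "z = vneg w" .
next
  assume "z = vneg w" then show "vadd p w z = vzero" by simp
qed

lemma parseval_c:
  "(\<Sum>a\<in>vecs p n. FT n f a * cnj (FT n f a)) = complex_of_real ((\<Sum>x\<in>vecs p n. (f x)\<^sup>2) / real (p ^ n))"
proof -
  define N where "N = (of_nat (p ^ n) :: complex)"
  have N0: "N \<noteq> 0" unfolding N_def using Np_pos by simp
  have "(\<Sum>a\<in>vecs p n. FT n f a * cnj (FT n f a))
      = (\<Sum>a\<in>vecs p n. \<Sum>x\<in>vecs p n. \<Sum>y\<in>vecs p n.
           of_real (f x) * of_real (f y) * chi n a (vadd p y (vneg x))) / (N * N)"
    unfolding FT_def N_def
    by (simp add: sum_divide_distrib sum_distrib_left sum_distrib_right chi_add chi_neg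
        mult_ac sum_product[symmetric] flip: of_nat_mult)
  also have "\<dots> = (\<Sum>x\<in>vecs p n. \<Sum>y\<in>vecs p n.
           of_real (f x) * of_real (f y) * (\<Sum>a\<in>vecs p n. chi n a (vadd p y (vneg x)))) / (N * N)"
  proof -
    have "(\<Sum>a\<in>vecs p n. \<Sum>x\<in>vecs p n. \<Sum>y\<in>vecs p n.
           of_real (f x) * of_real (f y) * chi n a (vadd p y (vneg x)))
       = (\<Sum>x\<in>vecs p n. \<Sum>a\<in>vecs p n. \<Sum>y\<in>vecs p n.
           of_real (f x) * of_real (f y) * chi n a (vadd p y (vneg x)))" by (rule sum.swap)
    also have "\<dots> = (\<Sum>x\<in>vecs p n. \<Sum>y\<in>vecs p n. \<Sum>a\<in>vecs p n.
           of_real (f x) * of_real (f y) * chi n a (vadd p y (vneg x)))"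
      by (rule sum.cong[OF refl], rule sum.swap)
    finally show ?thesis by (simp add: sum_distrib_left)
  qed
  also have "\<dots> = (\<Sum>x\<in>vecs p n. \<Sum>y\<in>vecs p n.
           of_real (f x) * of_real (f y) * (if y = x then N else 0)) / (N * N)"
  proof -
    have "\<And>x y. x \<in> vecs p n \<Longrightarrow> y \<in> vecs p n \<Longrightarrow>
      (\<Sum>a\<in>vecs p n. chi n a (vadd p y (vneg x))) = (if y = x then N else 0)"
      using orth_sym vadd_eq_zero_iff unfolding N_def by (auto simp del: vadd_neg)
    then show ?thesis by (intro arg_cong2[where f="(/)"] sum.cong refl) auto
  qed
  also have "\<dots> = (\<Sum>x\<in>vecs p n. of_real (f x) * of_real (f x) * N) / (N * N)"
    by (simp add: if_distrib cong: if_cong)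
  also have "\<dots> = (N * complex_of_real (\<Sum>x\<in>vecs p n. (f x)\<^sup>2)) / (N * N)"
    by (simp add: sum_distrib_left power2_eq_square mult_ac)
  also have "\<dots> = complex_of_real (\<Sum>x\<in>vecs p n. (f x)\<^sup>2) / N"
    using N0 by simp
  also have "\<dots> = complex_of_real ((\<Sum>x\<in>vecs p n. (f x)\<^sup>2) / real (p ^ n))"
    unfolding N_def by simp
  finally show ?thesis .
qed

lemma parseval:
  "(\<Sum>a\<in>vecs p n. (cmod (FT n f a))\<^sup>2) = (\<Sum>x\<in>vecs p n. (f x)\<^sup>2) / real (p ^ n)"
proof -
  have "complex_of_real (\<Sum>a\<in>vecs p n. (cmod (FT n f a))\<^sup>2) = (\<Sum>a\<in>vecs p n. FT n f a * cnj (FT n f a))"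
    unfolding of_real_sum by (intro sum.cong refl) (rule complex_norm_square)
  then show ?thesis using parseval_c[of n f] of_real_eq_iff by metis
qed

end

context oddp begin

definition Tri :: "nat \<Rightarrow> ((nat \<Rightarrow> int) \<Rightarrow> real) \<Rightarrow> ((nat \<Rightarrow> int) \<Rightarrow> real) \<Rightarrow> ((nat \<Rightarrow> int) \<Rightarrow> real) \<Rightarrow> real" where
  "Tri n a b c = (\<Sum>m\<in>vecs p n. \<Sum>d\<in>vecs p n. a m * b (vadd p m d) * c (vadd p m (vadd p d d)))"

lemma id_2d: "vadd p m (vadd p d d) = vadd p (vscale p 2 (vadd p m d)) (vneg m)"
  by (rule ext) (simp only: vadd_def vneg_def vscale_def, simp add: mod_simps, (simp add: algebra_simps)?)

lemma id_neg: "vneg (vadd p x (vscale p (-2) y)) = vadd p (vscale p 2 y) (vneg x)"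
  by (rule ext) (simp only: vadd_def vneg_def vscale_def, simp add: mod_simps, (simp add: algebra_simps)?)

lemma Tri_xy: "Tri n a b c = (\<Sum>x\<in>vecs p n. \<Sum>y\<in>vecs p n. a x * b y * c (vadd p (vscale p 2 y) (vneg x)))"
proof -
  have "\<And>m. m \<in> vecs p n \<Longrightarrow> (\<Sum>d\<in>vecs p n. a m * b (vadd p m d) * c (vadd p m (vadd p d d)))
      = (\<Sum>y\<in>vecs p n. a m * b y * c (vadd p (vscale p 2 y) (vneg m)))"
  proof -
    fix m assume m: "m \<in> vecs p n"
    have "(\<Sum>d\<in>vecs p n. a m * b (vadd p m d) * c (vadd p m (vadd p d d)))
       = (\<Sum>d\<in>vecs p n. (\<lambda>y. a m * b y * c (vadd p (vscale p 2 y) (vneg m))) (vadd p m d))"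
      by (simp add: id_2d)
    also have "\<dots> = (\<Sum>y\<in>vecs p n. a m * b y * c (vadd p (vscale p 2 y) (vneg m)))"
      by (rule sum_shift[OF m])
    finally show "?thesis m" .
  qed
  then show ?thesis unfolding Tri_def by (rule sum.cong[OF refl])
qed

lemma indicator_orth: assumes w: "w \<in> vecs p n" and z: "z \<in> vecs p n"
  shows "complex_of_real (if z = vneg w then 1 else 0) = (\<Sum>t\<in>vecs p n. chi n t (vadd p w z)) / of_nat (p ^ n)"
proof -
  have "(\<Sum>t\<in>vecs p n. chi n t (vadd p w z)) = (if vadd p w z = vzero then of_nat (p ^ n) else 0)"
    using orth_sym[of "vadd p w z" n] w z by simp
  then show ?thesis using vadd_zero_iff[OF w z] Np_pos[of n] by auto
qed

lemma c_as_sum: assumes x: "x \<in> vecs p n" and y: "y \<in> vecs p n"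
  shows "complex_of_real (c (vadd p (vscale p 2 y) (vneg x)))
    = (\<Sum>z\<in>vecs p n. \<Sum>t\<in>vecs p n. of_real (c z) * (chi n t x * chi n (vscale p (-2) t) y * chi n t z)) / of_nat (p ^ n)"
proof -
  define w where "w = vadd p x (vscale p (-2) y)"
  have w: "w \<in> vecs p n" unfolding w_def using x y by simp
  have vw: "vneg w = vadd p (vscale p 2 y) (vneg x)" unfolding w_def by (rule id_neg)
  have "complex_of_real (c (vneg w)) = (\<Sum>z\<in>vecs p n. of_real (c z) * of_real (if z = vneg w then 1 else 0))"
    using vneg_vecs[OF w] by (simp add: if_distrib cong: if_cong)
  also have "\<dots> = (\<Sum>z\<in>vecs p n. of_real (c z) * ((\<Sum>t\<in>vecs p n. chi n t (vadd p w z)) / of_nat (p ^ n)))"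
    by (intro sum.cong refl) (simp add: indicator_orth[OF w])
  also have "\<dots> = (\<Sum>z\<in>vecs p n. \<Sum>t\<in>vecs p n. of_real (c z) * (chi n t x * chi n (vscale p (-2) t) y * chi n t z)) / of_nat (p ^ n)"
  proof -
    have "\<And>t z. chi n t (vadd p w z) = chi n t x * chi n (vscale p (-2) t) y * chi n t z"
      unfolding w_def chi_add by (simp add: chi_scale chi_scale')
    then show ?thesis by (simp add: sum_divide_distrib sum_distrib_left)
  qed
  finally show ?thesis using vw by simp
qed

lemma N_FT: "of_nat (p ^ n) * FT n f t = (\<Sum>x\<in>vecs p n. complex_of_real (f x) * chi n t x)"
  unfolding FT_def using Np_pos[of n] by simp

lemma triple_prod: "(\<Sum>x\<in>X. \<Sum>y\<in>Y. \<Sum>z\<in>Z. (A x :: complex) * B y * C z) = sum A X * sum B Y * sum C Z"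
proof -
  have "(\<Sum>x\<in>X. \<Sum>y\<in>Y. \<Sum>z\<in>Z. (A x :: complex) * B y * C z) = (\<Sum>x\<in>X. A x * (\<Sum>y\<in>Y. B y * (\<Sum>z\<in>Z. C z)))"
    by (simp add: sum_distrib_left mult.assoc)
  also have "\<dots> = sum A X * (sum B Y * sum C Z)"
    by (simp only: sum_distrib_right[symmetric])
  finally show ?thesis by (simp add: mult.assoc)
qed

lemma tri_fourier:
  "complex_of_real (Tri n a b c) = of_nat (p ^ n) ^ 2 *
     (\<Sum>t\<in>vecs p n. FT n a t * FT n b (vscale p (-2) t) * FT n c t)"
proof -
  define N where "N = (of_nat (p ^ n) :: complex)"
  have N0: "N \<noteq> 0" unfolding N_def using Np_pos by simp
  have "complex_of_real (Tri n a b c) = (\<Sum>x\<in>vecs p n. \<Sum>y\<in>vecs p n.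
      of_real (a x) * of_real (b y) * complex_of_real (c (vadd p (vscale p 2 y) (vneg x))))"
    unfolding Tri_xy by simp
  also have "\<dots> = (\<Sum>x\<in>vecs p n. \<Sum>y\<in>vecs p n. \<Sum>z\<in>vecs p n. \<Sum>t\<in>vecs p n.
      (of_real (a x) * chi n t x) * (of_real (b y) * chi n (vscale p (-2) t) y) * (of_real (c z) * chi n t z)) / N"
  proof -
    have "(\<Sum>x\<in>vecs p n. \<Sum>y\<in>vecs p n.
      of_real (a x) * of_real (b y) * complex_of_real (c (vadd p (vscale p 2 y) (vneg x))))
      = (\<Sum>x\<in>vecs p n. \<Sum>y\<in>vecs p n. of_real (a x) * of_real (b y) *
        ((\<Sum>z\<in>vecs p n. \<Sum>t\<in>vecs p n. of_real (c z) * (chi n t x * chi n (vscale p (-2) t) y * chi n t z)) / N))"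
      unfolding N_def by (intro sum.cong refl) (simp add: c_as_sum)
    also have "\<dots> = (\<Sum>x\<in>vecs p n. \<Sum>y\<in>vecs p n. \<Sum>z\<in>vecs p n. \<Sum>t\<in>vecs p n.
      of_real (a x) * of_real (b y) * (of_real (c z) * (chi n t x * chi n (vscale p (-2) t) y * chi n t z))) / N"
      by (simp add: sum_divide_distrib sum_distrib_left)
    also have "\<dots> = (\<Sum>x\<in>vecs p n. \<Sum>y\<in>vecs p n. \<Sum>z\<in>vecs p n. \<Sum>t\<in>vecs p n.
      (of_real (a x) * chi n t x) * (of_real (b y) * chi n (vscale p (-2) t) y) * (of_real (c z) * chi n t z)) / N"
      by (simp add: mult_ac)
    finally show ?thesis .
  qed
  also have "\<dots> = (\<Sum>t\<in>vecs p n. \<Sum>x\<in>vecs p n. \<Sum>y\<in>vecs p n. \<Sum>z\<in>vecs p n.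
      (of_real (a x) * chi n t x) * (of_real (b y) * chi n (vscale p (-2) t) y) * (of_real (c z) * chi n t z)) / N"
  proof -
    have "\<And>x y. (\<Sum>z\<in>vecs p n. \<Sum>t\<in>vecs p n. (of_real (a x) * chi n t x) * (of_real (b y) * chi n (vscale p (-2) t) y) * (of_real (c z) * chi n t z))
        = (\<Sum>t\<in>vecs p n. \<Sum>z\<in>vecs p n. (of_real (a x) * chi n t x) * (of_real (b y) * chi n (vscale p (-2) t) y) * (of_real (c z) * chi n t z))"
      by (rule sum.swap)
    then have "(\<Sum>x\<in>vecs p n. \<Sum>y\<in>vecs p n. \<Sum>z\<in>vecs p n. \<Sum>t\<in>vecs p n.
      (of_real (a x) * chi n t x) * (of_real (b y) * chi n (vscale p (-2) t) y) * (of_real (c z) * chi n t z))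
      = (\<Sum>x\<in>vecs p n. \<Sum>y\<in>vecs p n. \<Sum>t\<in>vecs p n. \<Sum>z\<in>vecs p n.
      (of_real (a x) * chi n t x) * (of_real (b y) * chi n (vscale p (-2) t) y) * (of_real (c z) * chi n t z))"
      by simp
    also have "\<dots> = (\<Sum>x\<in>vecs p n. \<Sum>t\<in>vecs p n. \<Sum>y\<in>vecs p n. \<Sum>z\<in>vecs p n.
      (of_real (a x) * chi n t x) * (of_real (b y) * chi n (vscale p (-2) t) y) * (of_real (c z) * chi n t z))"
      by (rule sum.cong[OF refl], rule sum.swap)
    also have "\<dots> = (\<Sum>t\<in>vecs p n. \<Sum>x\<in>vecs p n. \<Sum>y\<in>vecs p n. \<Sum>z\<in>vecs p n.
      (of_real (a x) * chi n t x) * (of_real (b y) * chi n (vscale p (-2) t) y) * (of_real (c z) * chi n t z))"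
      by (rule sum.swap)
    finally show ?thesis by simp
  qed
  also have "\<dots> = (\<Sum>t\<in>vecs p n. (N * FT n a t) * (N * FT n b (vscale p (-2) t)) * (N * FT n c t)) / N"
  proof -
    have "\<And>t. (\<Sum>x\<in>vecs p n. \<Sum>y\<in>vecs p n. \<Sum>z\<in>vecs p n.
      (of_real (a x) * chi n t x) * (of_real (b y) * chi n (vscale p (-2) t) y) * (of_real (c z) * chi n t z))
      = (N * FT n a t) * (N * FT n b (vscale p (-2) t)) * (N * FT n c t)"
      unfolding N_FT N_def by (rule triple_prod)
    then show ?thesis by simp
  qed
  also have "\<dots> = (N * (N ^ 2 * (\<Sum>t\<in>vecs p n. FT n a t * FT n b (vscale p (-2) t) * FT n c t))) / N"
    by (simp add: sum_distrib_left power2_eq_square mult_ac)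
  also have "\<dots> = N ^ 2 * (\<Sum>t\<in>vecs p n. FT n a t * FT n b (vscale p (-2) t) * FT n c t)"
    using N0 by simp
  finally show ?thesis unfolding N_def .
qed

end

context oddp begin

definition ind :: "nat \<Rightarrow> (nat \<Rightarrow> int) set \<Rightarrow> (nat \<Rightarrow> int) \<Rightarrow> bool" where
  "ind n W t \<longleftrightarrow> (\<forall>w\<in>W. chi n t w = 1)"

lemma shift_back: "x \<in> vecs p n \<Longrightarrow> vadd p (vadd p (vneg w) x) w = x"
proof -
  assume x: "x \<in> vecs p n"
  have "vadd p (vadd p (vneg w) x) w = (\<lambda>i. x i mod int p)"
    by (rule ext) (simp only: vadd_def vneg_def vscale_def, simp add: mod_simps, (simp add: algebra_simps)?)
  also have "\<dots> = x" using vecs_mod[OF x] by simp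
  finally show ?thesis .
qed

lemma FT_favg: assumes W: "is_subspace p n W"
  shows "FT n (favg p W f) t = FT n f t * (if ind n W t then 1 else 0)"
proof -
  define N where "N = (of_nat (p ^ n) :: complex)"
  have N0: "N \<noteq> 0" unfolding N_def using Np_pos by simp
  define K where "K = (of_nat (card W) :: complex)"
  have K0: "K \<noteq> 0" unfolding K_def using subsp_card_pos[OF W] by simp
  have inner: "\<And>w. w \<in> W \<Longrightarrow> (\<Sum>x\<in>vecs p n. of_real (f (vadd p x w)) * chi n t x) = chi n t (vneg w) * (N * FT n f t)"
  proof -
    fix w assume w: "w \<in> W"
    have wv: "vneg w \<in> vecs p n" using subsp_in[OF W w] by simp
    have "(\<Sum>x\<in>vecs p n. of_real (f (vadd p x w)) * chi n t x)
        = (\<Sum>x\<in>vecs p n. of_real (f (vadd p (vadd p (vneg w) x) w)) * chi n t (vadd p (vneg w) x))"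
      using sum_shift[OF wv, of "\<lambda>x. of_real (f (vadd p x w)) * chi n t x"] by simp
    also have "\<dots> = (\<Sum>x\<in>vecs p n. chi n t (vneg w) * (of_real (f x) * chi n t x))"
      by (intro sum.cong refl) (simp add: shift_back chi_add mult_ac)
    also have "\<dots> = chi n t (vneg w) * (N * FT n f t)"
      unfolding N_def N_FT by (simp add: sum_distrib_left)
    finally show "?thesis w" .
  qed
  have sumW: "(\<Sum>w\<in>W. chi n t (vneg w)) = (if ind n W t then K else 0)"
  proof -
    have "(\<Sum>w\<in>W. chi n t (vneg w)) = (\<Sum>w\<in>W. chi n t (vscale p (-1) w))" unfolding vneg_def ..
    also have "\<dots> = (\<Sum>w\<in>W. chi n t w)" by (rule sum_scale_W[OF W neg_one_unit])
    also have "\<dots> = (if ind n W t then K else 0)" unfolding orth_W[OF W] ind_def K_def ..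
    finally show ?thesis .
  qed
  have "N * FT n (favg p W f) t = (\<Sum>x\<in>vecs p n. of_real (favg p W f x) * chi n t x)"
    unfolding N_def by (rule N_FT)
  also have "\<dots> = (\<Sum>x\<in>vecs p n. \<Sum>w\<in>W. of_real (f (vadd p x w)) * chi n t x) / K"
    unfolding favg_def K_def by (simp add: sum_divide_distrib sum_distrib_right)
  also have "\<dots> = (\<Sum>w\<in>W. \<Sum>x\<in>vecs p n. of_real (f (vadd p x w)) * chi n t x) / K"
    by (simp add: sum.swap[of _ W])
  also have "\<dots> = (\<Sum>w\<in>W. chi n t (vneg w) * (N * FT n f t)) / K"
    by (simp add: inner)
  also have "\<dots> = (if ind n W t then K else 0) * (N * FT n f t) / K"
    by (simp add: sum_distrib_right[symmetric] sumW)
  also have "\<dots> = N * (FT n f t * (if ind n W t then 1 else 0))"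
    using K0 by simp
  finally show ?thesis using N0 by simp
qed

lemma ind_neg2: assumes W: "is_subspace p n W" and t: "t \<in> vecs p n"
  shows "ind n W (vscale p (-2) t) \<longleftrightarrow> ind n W t"
proof
  assume h: "ind n W t"
  show "ind n W (vscale p (-2) t)" unfolding ind_def
  proof
    fix w assume w: "w \<in> W"
    have "chi n (vscale p (-2) t) w = chi n t (vscale p (-2) w)" by (simp add: chi_scale chi_scale')
    also have "\<dots> = 1" using h subsp_scale[OF W w] unfolding ind_def by blast
    finally show "chi n (vscale p (-2) t) w = 1" .
  qed
next
  assume h: "ind n W (vscale p (-2) t)"
  show "ind n W t" unfolding ind_def
  proof
    fix w assume w: "w \<in> W"
    define hh where "hh = (int p - 1) div 2"
    have hh2: "-2 * hh = 1 - int p" unfolding hh_def using odd_p by (auto elim!: oddE)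
    have w': "vscale p hh w \<in> W" using subsp_scale[OF W w] .
    have "1 = chi n (vscale p (-2) t) (vscale p hh w)" using h w' unfolding ind_def by simp
    also have "\<dots> = e (-2 * dot n t (vscale p hh w))" by (simp add: chi_scale')
    also have "\<dots> = e (-2 * (hh * dot n t w))"
      by (rule e_cong) (metis dot_vscale_mod mod_mult_right_eq)
    also have "\<dots> = e (dot n t w + int p * (- dot n t w))"
      using hh2 by (simp add: algebra_simps)
    also have "\<dots> = chi n t w" unfolding chi_def by (simp only: e_add e_mult_p mult_1_right)
    finally show "chi n t w = 1" by simp
  qed
qed

end

context oddp begin

lemma Lambda3_Tri: "Lambda3 p n f = Tri n f f f / real p ^ (2 * n)"
  unfolding Lambda3_def Tri_def ..

lemma Lambda3_fourier: "complex_of_real (Lambda3 p n f) = (\<Sum>t\<in>vecs p n. FT n f t * FT n f (vscale p (-2) t) * FT n f t)"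
proof -
  have "complex_of_real (Lambda3 p n f) = complex_of_real (Tri n f f f) / of_real (real p ^ (2 * n))"
    unfolding Lambda3_Tri by simp
  also have "\<dots> = of_nat (p ^ n) ^ 2 * (\<Sum>t\<in>vecs p n. FT n f t * FT n f (vscale p (-2) t) * FT n f t) / of_nat (p ^ n) ^ 2"
    unfolding tri_fourier by (simp add: power_mult mult.commute)
  also have "\<dots> = (\<Sum>t\<in>vecs p n. FT n f t * FT n f (vscale p (-2) t) * FT n f t)"
    using Np_pos[of n] by simp
  finally show ?thesis .
qed

lemma lambda_compare:
  assumes W: "is_subspace p n W" and dpos: "\<delta> > 0"
    and spec: "\<forall>t\<in>vecs p n. \<delta> \<le> cmod (FT n f t) \<longrightarrow> ind n W t"
    and f01: "\<forall>x\<in>vecs p n. 0 \<le> f x \<and> f x \<le> 1"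
  shows "Lambda3 p n (favg p W f) \<le> Lambda3 p n f + \<delta>"
proof -
  define F where "F = FT n f"
  define D where "D = Lambda3 p n (favg p W f) - Lambda3 p n f"
  define df where "df = (\<lambda>t. if ind n W t then 0 else - (F t * F (vscale p (-2) t) * F t))"
  have "complex_of_real D = (\<Sum>t\<in>vecs p n. df t)"
  proof -
    have "complex_of_real D = (\<Sum>t\<in>vecs p n. FT n (favg p W f) t * FT n (favg p W f) (vscale p (-2) t) * FT n (favg p W f) t)
        - (\<Sum>t\<in>vecs p n. F t * F (vscale p (-2) t) * F t)"
      unfolding D_def F_def of_real_diff Lambda3_fourier ..
    also have "\<dots> = (\<Sum>t\<in>vecs p n. FT n (favg p W f) t * FT n (favg p W f) (vscale p (-2) t) * FT n (favg p W f) t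
        - F t * F (vscale p (-2) t) * F t)"
      by (simp add: sum_subtractf)
    also have "\<dots> = (\<Sum>t\<in>vecs p n. df t)"
    proof (intro sum.cong refl)
      fix t assume t: "t \<in> vecs p n"
      show "FT n (favg p W f) t * FT n (favg p W f) (vscale p (-2) t) * FT n (favg p W f) t
        - F t * F (vscale p (-2) t) * F t = df t"
        unfolding df_def FT_favg[OF W] F_def using ind_neg2[OF W t] by simp
    qed
    finally show ?thesis .
  qed
  then have "\<bar>D\<bar> \<le> (\<Sum>t\<in>vecs p n. cmod (df t))"
    by (metis norm_of_real norm_sum)
  also have "\<dots> \<le> (\<Sum>t\<in>vecs p n. \<delta> * (cmod (F t))\<^sup>2)"
  proof (rule sum_mono)
    fix t assume t: "t \<in> vecs p n"
    show "cmod (df t) \<le> \<delta> * (cmod (F t))\<^sup>2"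
    proof (cases "ind n W t")
      case True then show ?thesis unfolding df_def using dpos by simp
    next
      case False
      then have "\<not> ind n W (vscale p (-2) t)" using ind_neg2[OF W t] by simp
      then have "cmod (F (vscale p (-2) t)) < \<delta>" using spec t unfolding F_def by force
      then have "cmod (F (vscale p (-2) t)) * (cmod (F t))\<^sup>2 \<le> \<delta> * (cmod (F t))\<^sup>2"
        by (intro mult_right_mono) auto
      then show ?thesis unfolding df_def using False by (simp add: norm_mult power2_eq_square mult_ac)
    qed
  qed
  also have "\<dots> = \<delta> * ((\<Sum>x\<in>vecs p n. (f x)\<^sup>2) / real (p ^ n))"
    unfolding F_def by (simp add: sum_distrib_left[symmetric] parseval)
  also have "\<dots> \<le> \<delta> * 1"
  proof (rule mult_left_mono)
    have "(\<Sum>x\<in>vecs p n. (f x)\<^sup>2) \<le> (\<Sum>x\<in>vecs p n. 1)"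
      by (rule sum_mono) (use f01 in \<open>auto simp: power_le_one\<close>)
    also have "\<dots> = real (p ^ n)" by (simp add: card_vecs)
    finally show "(\<Sum>x\<in>vecs p n. (f x)\<^sup>2) / real (p ^ n) \<le> 1" using Np_pos[of n] by simp
  qed (use dpos in simp)
  finally show ?thesis unfolding D_def by simp
qed

end

context oddp begin

definition coset :: "(nat \<Rightarrow> int) set \<Rightarrow> (nat \<Rightarrow> int) \<Rightarrow> (nat \<Rightarrow> int) set" where
  "coset W x = (\<lambda>w. vadd p x w) ` W"

lemma coset_card: "is_subspace p n W \<Longrightarrow> x \<in> vecs p n \<Longrightarrow> card (coset W x) = card W"
  unfolding coset_def by (rule card_image, rule inj_on_subset[OF vadd_inj subsp_sub])

lemma coset_sub: "is_subspace p n W \<Longrightarrow> x \<in> vecs p n \<Longrightarrow> coset W x \<subseteq> vecs p n"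
  unfolding coset_def using subsp_in by auto

lemma coset_self: "is_subspace p n W \<Longrightarrow> x \<in> vecs p n \<Longrightarrow> x \<in> coset W x"
  unfolding coset_def using subsp_zero[of n W] by (metis image_eqI vadd_zero)

lemma id_re: "vadd p (vadd p (vadd p x w1) (vneg w1)) w = vadd p x w"
  by (rule ext) (simp only: vadd_def vneg_def vscale_def, simp add: mod_simps, (simp add: algebra_simps)?)

lemma id_re2: "vadd p (vadd p (vadd p y w2) (vneg w1)) w = vadd p y (vadd p (vadd p w2 (vneg w1)) w)"
  by (rule ext) (simp only: vadd_def vneg_def vscale_def, simp add: mod_simps, (simp add: algebra_simps)?)

lemma coset_sub_coset:
  assumes W: "is_subspace p n W" and w1: "w1 \<in> W" and w2: "w2 \<in> W" and e: "vadd p x w1 = vadd p y w2"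
  shows "coset W x \<subseteq> coset W y"
proof
  fix z assume "z \<in> coset W x"
  then obtain w where w: "w \<in> W" "z = vadd p x w" unfolding coset_def by blast
  have "z = vadd p (vadd p (vadd p x w1) (vneg w1)) w" using w(2) id_re by simp
  also have "\<dots> = vadd p y (vadd p (vadd p w2 (vneg w1)) w)" unfolding e by (rule id_re2)
  finally have "z = vadd p y (vadd p (vadd p w2 (vneg w1)) w)" .
  moreover have "vadd p (vadd p w2 (vneg w1)) w \<in> W"
    using W w1 w2 w(1) unfolding vneg_def by (intro subsp_add subsp_scale) auto
  ultimately show "z \<in> coset W y" unfolding coset_def by blast
qed

lemma card_subsp_dvd: assumes W: "is_subspace p n W" shows "card W dvd p ^ n"
proof -
  define C where "C = coset W ` vecs p n"
  have fC: "finite C" unfolding C_def by simp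
  have UC: "\<Union>C = vecs p n"
  proof
    show "\<Union>C \<subseteq> vecs p n" unfolding C_def using coset_sub[OF W] by blast
    show "vecs p n \<subseteq> \<Union>C" unfolding C_def using coset_self[OF W] by blast
  qed
  have "card W * card C = card (\<Union>C)"
  proof (rule card_partition[OF fC])
    show "finite (\<Union>C)" using UC by simp
    show "\<And>c. c \<in> C \<Longrightarrow> card c = card W" unfolding C_def using coset_card[OF W] by blast
    show "\<And>c1 c2. c1 \<in> C \<Longrightarrow> c2 \<in> C \<Longrightarrow> c1 \<noteq> c2 \<Longrightarrow> c1 \<inter> c2 = {}"
    proof -
      fix c1 c2 assume c1: "c1 \<in> C" and c2: "c2 \<in> C" and ne: "c1 \<noteq> c2"
      show "c1 \<inter> c2 = {}"
      proof (rule ccontr)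
        assume "c1 \<inter> c2 \<noteq> {}"
        then obtain z where z: "z \<in> c1" "z \<in> c2" by blast
        obtain x where x: "x \<in> vecs p n" "c1 = coset W x" using c1 unfolding C_def by blast
        obtain y where y: "y \<in> vecs p n" "c2 = coset W y" using c2 unfolding C_def by blast
        obtain w1 where w1: "w1 \<in> W" "z = vadd p x w1" using z(1) x(2) unfolding coset_def by blast
        obtain w2 where w2: "w2 \<in> W" "z = vadd p y w2" using z(2) y(2) unfolding coset_def by blast
        have "c1 \<subseteq> c2" using coset_sub_coset[OF W w1(1) w2(1)] w1 w2 x y by simp
        moreover have "c2 \<subseteq> c1" using coset_sub_coset[OF W w2(1) w1(1)] w1 w2 x y by simp
        ultimately show False using ne by simp
      qed
    qed
  qed
  then have "card W * card C = p ^ n" using UC card_vecs by simp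
  then show ?thesis by (metis dvd_triv_left)
qed

lemma card_subsp_pow: assumes W: "is_subspace p n W" shows "\<exists>d\<le>n. card W = p ^ d"
  using card_subsp_dvd[OF W] divides_primepow_nat[OF prime_p] by blast

lemma codim_eq: assumes W: "is_subspace p n W" and d: "card W = p ^ d"
  shows "codim p n W = n - d"
proof -
  have "(THE d. card W = p ^ d) = d"
  proof (rule the_equality)
    show "card W = p ^ d" by (rule d)
    fix d' assume "card W = p ^ d'"
    then show "d' = d" using d p_gt1 by (simp add: power_inject_exp)
  qed
  then show ?thesis unfolding codim_def by simp
qed

end

context oddp begin

definition annW :: "nat \<Rightarrow> (nat \<Rightarrow> int) set \<Rightarrow> (nat \<Rightarrow> int) set" where
  "annW n S = {x \<in> vecs p n. \<forall>t\<in>S. chi n t x = 1}"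

lemma annW_subsp: "is_subspace p n (annW n S)"
  unfolding is_subspace_def
proof (intro conjI ballI)
  show "annW n S \<subseteq> vecs p n" unfolding annW_def by auto
  show "vzero \<in> annW n S" unfolding annW_def by simp
  fix u v assume u: "u \<in> annW n S" and v: "v \<in> annW n S"
  then show "vadd p u v \<in> annW n S" unfolding annW_def by (auto simp: chi_add)
next
  fix c v assume v: "v \<in> annW n S"
  show "vscale p c v \<in> annW n S" unfolding annW_def
  proof (intro CollectI conjI ballI)
    show "vscale p c v \<in> vecs p n" using v unfolding annW_def by simp
    fix t assume t: "t \<in> S"
    have "e (dot n t v) = 1" using v t unfolding annW_def chi_def by auto
    then have "dot n t v mod int p = 0" using e_one_iff by simp
    then have "(c * dot n t v) mod int p = 0" by (simp add: mod_mult_right_eq[symmetric])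
    then show "chi n t (vscale p c v) = 1" unfolding chi_scale using e_one_iff by simp
  qed
qed

lemma id_back: "y \<in> vecs p n \<Longrightarrow> vadd p x0 (vadd p y (vneg x0)) = y"
proof -
  assume y: "y \<in> vecs p n"
  have "vadd p x0 (vadd p y (vneg x0)) = (\<lambda>i. y i mod int p)"
    by (rule ext) (simp only: vadd_def vneg_def vscale_def, simp add: mod_simps, (simp add: algebra_simps)?)
  also have "\<dots> = y" using vecs_mod[OF y] by simp
  finally show ?thesis .
qed

lemma annW_card: assumes S: "finite S"
  shows "p ^ n \<le> card (annW n S) * p ^ card S"
proof -
  define W where "W = annW n S"
  have W: "is_subspace p n W" unfolding W_def by (rule annW_subsp)
  define Phi where "Phi = (\<lambda>x. restrict (\<lambda>t. dot n t x mod int p) S)"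
  define fib where "fib = (\<lambda>v. {x \<in> vecs p n. Phi x = v})"
  have img: "Phi ` vecs p n \<subseteq> S \<rightarrow>\<^sub>E {0..<int p}"
    unfolding Phi_def using p_pos by auto
  have fimg: "finite (S \<rightarrow>\<^sub>E {0..<int p})" using S by (simp add: finite_PiE)
  have cimg: "card (Phi ` vecs p n) \<le> p ^ card S"
    using card_mono[OF fimg img] S by (simp add: card_PiE)
  have fibcard: "\<And>v. v \<in> Phi ` vecs p n \<Longrightarrow> card (fib v) \<le> card W"
  proof -
    fix v assume "v \<in> Phi ` vecs p n"
    then obtain x0 where x0: "x0 \<in> vecs p n" "v = Phi x0" by blast
    have "fib v \<subseteq> coset W x0"
    proof
      fix y assume "y \<in> fib v"
      then have y: "y \<in> vecs p n" "Phi y = Phi x0" unfolding fib_def using x0 by auto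
      have "vadd p y (vneg x0) \<in> W" unfolding W_def annW_def
      proof (intro CollectI conjI ballI)
        show "vadd p y (vneg x0) \<in> vecs p n" using y x0 by simp
        fix t assume t: "t \<in> S"
        have "dot n t y mod int p = dot n t x0 mod int p"
          using fun_cong[OF y(2), of t] t unfolding Phi_def by simp
        then have "(dot n t y - dot n t x0) mod int p = 0 mod int p"
          by (simp add: mod_diff_cong)
        then have "e (dot n t y - dot n t x0) = 1" using e_cong[of "dot n t y - dot n t x0" 0] by simp
        then show "chi n t (vadd p y (vneg x0)) = 1"
          unfolding chi_add chi_neg by (simp add: chi_def e_neg[symmetric] e_add[symmetric])
      qed
      then show "y \<in> coset W x0" unfolding coset_def using id_back[OF y(1), of x0] by force
    qed
    then have "card (fib v) \<le> card (coset W x0)"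
      by (rule card_mono[OF finite_subset[OF coset_sub[OF W x0(1)]], rotated]) simp
    then show "card (fib v) \<le> card W" using coset_card[OF W x0(1)] by simp
  qed
  have "vecs p n \<subseteq> (\<Union>v\<in>Phi ` vecs p n. fib v)" unfolding fib_def by auto
  then have "card (vecs p n) \<le> card (\<Union>v\<in>Phi ` vecs p n. fib v)"
    by (rule card_mono[rotated]) (auto simp: fib_def)
  also have "\<dots> \<le> (\<Sum>v\<in>Phi ` vecs p n. card (fib v))" by (rule card_UN_le) simp
  also have "\<dots> \<le> (\<Sum>v\<in>Phi ` vecs p n. card W)" by (rule sum_mono) (rule fibcard)
  also have "\<dots> = card (Phi ` vecs p n) * card W" by simp
  also have "\<dots> \<le> p ^ card S * card W" using cimg by simp
  finally show ?thesis unfolding W_def card_vecs by (simp add: mult.commute)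
qed

lemma codim_annW: assumes S: "finite S" shows "codim p n (annW n S) \<le> card S"
proof -
  obtain d where d: "d \<le> n" "card (annW n S) = p ^ d" using card_subsp_pow[OF annW_subsp] by blast
  have "p ^ n \<le> p ^ (d + card S)" using annW_card[OF S, of n] d(2) by (simp add: power_add)
  then have "n \<le> d + card S" using p_gt1 by simp
  then show ?thesis using codim_eq[OF annW_subsp d(2)] by simp
qed

end

context oddp begin

lemma fourier_step:
  assumes dpos: "\<delta> > 0" and f01: "\<forall>x\<in>vecs p n. 0 \<le> f x \<and> f x \<le> 1"
  shows "\<exists>W. is_subspace p n W \<and> real (codim p n W) \<le> 1 / \<delta>\<^sup>2 \<and>
             Lambda3 p n (favg p W f) \<le> Lambda3 p n f + \<delta>"
proof -
  define S where "S = {t \<in> vecs p n. \<delta> \<le> cmod (FT n f t)}"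
  have fS: "finite S" unfolding S_def by simp
  define W where "W = annW n S"
  have W: "is_subspace p n W" unfolding W_def by (rule annW_subsp)
  have "real (card S) * \<delta>\<^sup>2 = (\<Sum>t\<in>S. \<delta>\<^sup>2)" by simp
  also have "\<dots> \<le> (\<Sum>t\<in>S. (cmod (FT n f t))\<^sup>2)"
    by (rule sum_mono) (use dpos in \<open>auto simp: S_def intro!: power_mono\<close>)
  also have "\<dots> \<le> (\<Sum>t\<in>vecs p n. (cmod (FT n f t))\<^sup>2)"
    by (rule sum_mono2) (auto simp: S_def)
  also have "\<dots> = (\<Sum>x\<in>vecs p n. (f x)\<^sup>2) / real (p ^ n)" by (rule parseval)
  also have "\<dots> \<le> 1"
  proof -
    have "(\<Sum>x\<in>vecs p n. (f x)\<^sup>2) \<le> (\<Sum>x\<in>vecs p n. 1)"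
      by (rule sum_mono) (use f01 in \<open>auto simp: power_le_one\<close>)
    also have "\<dots> = real (p ^ n)" by (simp add: card_vecs)
    finally show ?thesis using Np_pos[of n] by simp
  qed
  finally have cS: "real (card S) \<le> 1 / \<delta>\<^sup>2" using dpos by (simp add: field_simps)
  have "real (codim p n W) \<le> real (card S)" unfolding W_def using codim_annW[OF fS] by simp
  moreover have "Lambda3 p n (favg p W f) \<le> Lambda3 p n f + \<delta>"
  proof (rule lambda_compare[OF W dpos _ f01])
    show "\<forall>t\<in>vecs p n. \<delta> \<le> cmod (FT n f t) \<longrightarrow> ind n W t"
      unfolding ind_def W_def annW_def S_def by auto
  qed
  ultimately show ?thesis using W cS by force
qed

lemma sum_affine_Zp:
  assumes a: "a mod int p \<noteq> 0"
  shows "(\<Sum>t\<in>{0..<int p}. H ((b + a * t) mod int p)) = (\<Sum>t\<in>{0..<int p}. H t)"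
proof (rule sum_bij_self)
  show "finite {0..<int p}" by simp
  show "\<And>x. x \<in> {0..<int p} \<Longrightarrow> (b + a * x) mod int p \<in> {0..<int p}" using p_pos by simp
  show "inj_on (\<lambda>t. (b + a * t) mod int p) {0..<int p}"
  proof (rule inj_onI)
    fix x y assume x: "x \<in> {0..<int p}" and y: "y \<in> {0..<int p}"
      and e: "(b + a * x) mod int p = (b + a * y) mod int p"
    have "int p dvd (b + a * x) - (b + a * y)" using e by (simp add: mod_eq_dvd_iff)
    then have "int p dvd a * (x - y)" by (simp add: algebra_simps)
    then have "int p dvd a \<or> int p dvd (x - y)" using prime_int prime_dvd_mult_iff by blast
    then have "int p dvd (x - y)" using a by (auto simp: dvd_eq_mod_eq_0)
    then have "x mod int p = y mod int p" by (simp add: mod_eq_dvd_iff)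
    then show "x = y" using x y by simp
  qed
qed

lemma sum_coord_W:
  assumes W: "is_subspace p n W" and w0: "w0 \<in> W" and a: "w0 i0 mod int p \<noteq> 0"
  shows "(\<Sum>w\<in>W. H (w i0)) = real (card W) / real p * (\<Sum>t\<in>{0..<int p}. H t)"
proof -
  have w0v: "w0 \<in> vecs p n" using subsp_in[OF W w0] .
  have step: "\<And>j. (\<Sum>w\<in>W. H (w i0)) = (\<Sum>w\<in>W. H ((w i0 + w0 i0 * j) mod int p))"
  proof -
    fix j :: int
    have z: "vscale p j w0 \<in> W" using subsp_scale[OF W w0] .
    have "(\<Sum>w\<in>W. H (w i0)) = (\<Sum>w\<in>W. H ((vadd p (vscale p j w0) w) i0))"
      using sum_shift_W[OF W z, of "\<lambda>w. H (w i0)"] by simp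
    also have "\<dots> = (\<Sum>w\<in>W. H ((w i0 + w0 i0 * j) mod int p))"
      by (intro sum.cong refl) (simp add: vadd_def vscale_def mod_simps algebra_simps)
    finally show "?thesis j" .
  qed
  have "real p * (\<Sum>w\<in>W. H (w i0)) = (\<Sum>j\<in>{0..<int p}. \<Sum>w\<in>W. H (w i0))"
    by simp
  also have "\<dots> = (\<Sum>j\<in>{0..<int p}. \<Sum>w\<in>W. H ((w i0 + w0 i0 * j) mod int p))"
    using step by simp
  also have "\<dots> = (\<Sum>w\<in>W. \<Sum>j\<in>{0..<int p}. H ((w i0 + w0 i0 * j) mod int p))"
    by (rule sum.swap)
  also have "\<dots> = (\<Sum>w\<in>W. \<Sum>t\<in>{0..<int p}. H t)"
    by (intro sum.cong refl sum_affine_Zp a)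
  also have "\<dots> = real (card W) * (\<Sum>t\<in>{0..<int p}. H t)" by simp
  finally show ?thesis using p_gt1 by (simp add: field_simps)
qed

end

context oddp begin

definition periodic :: "(int \<Rightarrow> real) \<Rightarrow> bool" where
  "periodic P \<longleftrightarrow> (\<forall>x. P (x mod int p) = P x)"

lemma per_mod: "periodic P \<Longrightarrow> P (x mod int p) = P x" unfolding periodic_def by blast

lemma per_cong: "periodic P \<Longrightarrow> (x - y) mod int p = 0 \<Longrightarrow> P x = P y"
  by (metis per_mod mod_eq_dvd_iff dvd_eq_mod_eq_0)

lemma per_mod_left: "periodic P \<Longrightarrow> P (x mod int p + y) = P (x + y)"
  by (rule per_cong) (auto simp: mod_simps)

lemma per_mod_mult_left: "periodic P \<Longrightarrow> P (k * (x mod int p) + y) = P (k * x + y)"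
proof (rule per_cong)
  have "(k * (x mod int p) + y - (k * x + y)) = k * (x mod int p - x)" by (simp add: algebra_simps)
  moreover have "(x mod int p - x) mod int p = 0" by (simp add: mod_simps)
  ultimately show "(k * (x mod int p) + y - (k * x + y)) mod int p = 0"
    by (metis mod_mult_right_eq mult_zero_right mod_0)
qed

lemma shift_Zp: assumes "\<And>x. G (x mod int p) = G x"
  shows "(\<Sum>s\<in>{0..<int p}. G (c + s)) = (\<Sum>s\<in>{0..<int p}. G s)"
proof -
  have "(\<Sum>s\<in>{0..<int p}. G (c + s)) = (\<Sum>s\<in>{0..<int p}. G ((c + 1 * s) mod int p))"
    using assms by simp
  also have "\<dots> = (\<Sum>s\<in>{0..<int p}. G s)" by (rule sum_affine_Zp) (use p_gt1 in simp)
  finally show ?thesis .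
qed

lemma ZpL:
  assumes P: "periodic P" and ee: "(ee - 2 * b + a) mod int p = 0"
  shows "(\<Sum>s\<in>{0..<int p}. \<Sum>t\<in>{0..<int p}. P (s + a) * P (s + (b + t)) * P (s + (ee + 2 * t)))
       = (\<Sum>s\<in>{0..<int p}. \<Sum>t\<in>{0..<int p}. P s * P (s + t) * P (s + 2 * t))"
proof -
  define G1 where "G1 = (\<lambda>s. \<Sum>t\<in>{0..<int p}. P (s + a) * P (s + (b + t)) * P (s + (ee + 2 * t)))"
  have per1: "\<And>x. G1 (x mod int p) = G1 x" unfolding G1_def by (simp only: per_mod_left[OF P])
  have "(\<Sum>s\<in>{0..<int p}. G1 s) = (\<Sum>s\<in>{0..<int p}. G1 (- a + s))"
    by (rule shift_Zp[symmetric]) (rule per1)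
  also have "\<dots> = (\<Sum>s\<in>{0..<int p}. \<Sum>t\<in>{0..<int p}. P s * P (t + (s + (b - a))) * P (2 * t + (s + (ee - a))))"
    unfolding G1_def by (intro sum.cong refl) (simp add: algebra_simps)
  also have "\<dots> = (\<Sum>s\<in>{0..<int p}. \<Sum>t\<in>{0..<int p}. P s * P (s + t) * P (s + 2 * t))"
  proof (rule sum.cong[OF refl])
    fix s
    define G2 where "G2 = (\<lambda>t. P s * P (t + (s + (b - a))) * P (2 * t + (s + (ee - a))))"
    have per2: "\<And>x. G2 (x mod int p) = G2 x" unfolding G2_def
      by (simp only: per_mod_left[OF P] per_mod_mult_left[OF P])
    have "(\<Sum>t\<in>{0..<int p}. G2 t) = (\<Sum>t\<in>{0..<int p}. G2 (- (b - a) + t))"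
      by (rule shift_Zp[symmetric]) (rule per2)
    also have "\<dots> = (\<Sum>t\<in>{0..<int p}. P s * P (s + t) * P (s + 2 * t))"
    proof (intro sum.cong refl)
      fix t
      have 1: "- (b - a) + t + (s + (b - a)) = s + t" by (simp add: algebra_simps)
      have dq: "(2 * (- (b - a) + t) + (s + (ee - a)) - (s + 2 * t)) = ee - 2 * b + a" by (simp add: algebra_simps)
      have 2: "P (2 * (- (b - a) + t) + (s + (ee - a))) = P (s + 2 * t)"
        by (rule per_cong[OF P]) (unfold dq, rule ee)
      show "G2 (- (b - a) + t) = P s * P (s + t) * P (s + 2 * t)" unfolding G2_def 1 2 ..
    qed
    finally show "(\<Sum>t\<in>{0..<int p}. P s * P (t + (s + (b - a))) * P (2 * t + (s + (ee - a))))
        = (\<Sum>t\<in>{0..<int p}. P s * P (s + t) * P (s + 2 * t))" unfolding G2_def .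
  qed
  finally show ?thesis unfolding G1_def .
qed

end

lemma (in oddp) vadd_apply: "vadd p x y i = (x i + y i) mod int p" unfolding vadd_def ..
lemma (in oddp) vscale_apply: "vscale p k x i = (k * x i) mod int p" unfolding vscale_def ..

lemma (in oddp) S1: "vadd p (vadd p m (vscale p a w)) (vadd p d (vscale p b w)) = vadd p (vadd p m d) (vscale p (a + b) w)"
  by (rule ext) (simp only: vadd_def vscale_def, simp add: mod_simps, (simp add: algebra_simps)?)

lemma (in oddp) S2: "vadd p (vadd p m (vscale p a w)) (vadd p (vadd p d (vscale p b w)) (vadd p d (vscale p b w)))
   = vadd p (vadd p m (vadd p d d)) (vscale p (a + 2 * b) w)"
  by (rule ext) (simp only: vadd_def vscale_def, simp add: mod_simps, (simp add: algebra_simps)?)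

locale pert = oddp +
  fixes n :: nat and W :: "(nat \<Rightarrow> int) set" and w0 :: "nat \<Rightarrow> int" and i0 :: nat and P :: "int \<Rightarrow> real"
  assumes W: "is_subspace p n W" and w0: "w0 \<in> W" and a0: "w0 i0 mod int p \<noteq> 0"
    and P: "periodic P" and Psum: "(\<Sum>t\<in>{0..<int p}. P t) = 0"
begin

definition inv :: "((nat \<Rightarrow> int) \<Rightarrow> real) \<Rightarrow> bool" where
  "inv h \<longleftrightarrow> (\<forall>x\<in>vecs p n. \<forall>w\<in>W. h (vadd p x w) = h x)"

lemma inv_shift: "inv h \<Longrightarrow> x \<in> vecs p n \<Longrightarrow> w \<in> W \<Longrightarrow> h (vadd p x (vscale p k w)) = h x"
  unfolding inv_def using subsp_scale[OF W] by blast

lemma inv_add: "inv h \<Longrightarrow> x \<in> vecs p n \<Longrightarrow> w \<in> W \<Longrightarrow> h (vadd p x w) = h x"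
  unfolding inv_def by blast

lemma wv: "w \<in> W \<Longrightarrow> w \<in> vecs p n" using subsp_in[OF W] .

lemma Kz: assumes k: "k mod int p \<noteq> 0" shows "(\<Sum>w\<in>W. P (z + k * w i0)) = 0"
proof -
  have "(\<Sum>w\<in>W. P (z + k * w i0)) = real (card W) / real p * (\<Sum>t\<in>{0..<int p}. P (z + k * t))"
    by (rule sum_coord_W[OF W w0 a0])
  also have "(\<Sum>t\<in>{0..<int p}. P (z + k * t)) = (\<Sum>t\<in>{0..<int p}. P ((z + k * t) mod int p))"
    by (simp add: per_mod[OF P])
  also have "\<dots> = (\<Sum>t\<in>{0..<int p}. P t)" by (rule sum_affine_Zp[OF k])
  finally show ?thesis using Psum by simp
qed

lemma Mvanish:
  assumes G: "\<And>m d w. m \<in> vecs p n \<Longrightarrow> d \<in> vecs p n \<Longrightarrow> w \<in> W \<Longrightarrow>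
      G (vadd p m (vscale p a w)) (vadd p d (vscale p b w)) = R m d * P (Z m d + k * w i0)"
    and k: "k mod int p \<noteq> 0"
  shows "(\<Sum>m\<in>vecs p n. \<Sum>d\<in>vecs p n. G m d) = 0"
proof -
  have sh: "\<And>w. w \<in> W \<Longrightarrow> (\<Sum>m\<in>vecs p n. \<Sum>d\<in>vecs p n. G m d)
     = (\<Sum>m\<in>vecs p n. \<Sum>d\<in>vecs p n. G (vadd p m (vscale p a w)) (vadd p d (vscale p b w)))"
  proof -
    fix w assume w: "w \<in> W"
    have aw: "vscale p a w \<in> vecs p n" and bw: "vscale p b w \<in> vecs p n" using wv[OF w] by auto
    have "(\<Sum>m\<in>vecs p n. \<Sum>d\<in>vecs p n. G m d)
       = (\<Sum>m\<in>vecs p n. \<Sum>d\<in>vecs p n. G m (vadd p (vscale p b w) d))"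
      by (rule sum.cong[OF refl]) (rule sum_shift[OF bw, symmetric])
    also have "\<dots> = (\<Sum>m\<in>vecs p n. \<Sum>d\<in>vecs p n. G (vadd p (vscale p a w) m) (vadd p (vscale p b w) d))"
      using sum_shift[OF aw, of "\<lambda>m. \<Sum>d\<in>vecs p n. G m (vadd p (vscale p b w) d)"] by simp
    finally show "?thesis w" by (simp add: vadd_comm)
  qed
  have "real (card W) * (\<Sum>m\<in>vecs p n. \<Sum>d\<in>vecs p n. G m d)
      = (\<Sum>w\<in>W. (\<Sum>m\<in>vecs p n. \<Sum>d\<in>vecs p n. G m d))" by simp
  also have "\<dots> = (\<Sum>w\<in>W. \<Sum>m\<in>vecs p n. \<Sum>d\<in>vecs p n. G (vadd p m (vscale p a w)) (vadd p d (vscale p b w)))"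
    by (rule sum.cong[OF refl]) (rule sh)
  also have "\<dots> = (\<Sum>w\<in>W. \<Sum>m\<in>vecs p n. \<Sum>d\<in>vecs p n. R m d * P (Z m d + k * w i0))"
    by (intro sum.cong refl) (simp add: G)
  also have "\<dots> = (\<Sum>m\<in>vecs p n. \<Sum>d\<in>vecs p n. R m d * (\<Sum>w\<in>W. P (Z m d + k * w i0)))"
  proof -
    have "(\<Sum>w\<in>W. \<Sum>m\<in>vecs p n. \<Sum>d\<in>vecs p n. R m d * P (Z m d + k * w i0))
        = (\<Sum>m\<in>vecs p n. \<Sum>w\<in>W. \<Sum>d\<in>vecs p n. R m d * P (Z m d + k * w i0))" by (rule sum.swap)
    also have "\<dots> = (\<Sum>m\<in>vecs p n. \<Sum>d\<in>vecs p n. \<Sum>w\<in>W. R m d * P (Z m d + k * w i0))"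
      by (rule sum.cong[OF refl], rule sum.swap)
    finally show ?thesis by (simp add: sum_distrib_left)
  qed
  also have "\<dots> = 0" by (simp add: Kz[OF k])
  finally show ?thesis using subsp_card_pos[OF W] by simp
qed

end

context oddp begin
lemma Tri_add1: "Tri n (\<lambda>x. a x + a' x) b c = Tri n a b c + Tri n a' b c"
  unfolding Tri_def by (simp add: algebra_simps sum.distrib)
lemma Tri_add2: "Tri n a (\<lambda>x. b x + b' x) c = Tri n a b c + Tri n a b' c"
  unfolding Tri_def by (simp add: algebra_simps sum.distrib)
lemma Tri_add3: "Tri n a b (\<lambda>x. c x + c' x) = Tri n a b c + Tri n a b c'"
  unfolding Tri_def by (simp add: algebra_simps sum.distrib)
end

context pert begin

lemmas shsimps = S1 S2 vadd_apply vscale_apply mod_simps per_mod[OF P]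

lemma T1: assumes iu: "inv u" and ic: "inv c"
  shows "Tri n (\<lambda>x. c x * P (x i0)) u u = 0"
  unfolding Tri_def
proof (rule Mvanish[where a=1 and b=0 and k=1 and R="\<lambda>m d. c m * u (vadd p m d) * u (vadd p m (vadd p d d))" and Z="\<lambda>m d. m i0"])
  fix m d w assume m: "m \<in> vecs p n" and d: "d \<in> vecs p n" and w: "w \<in> W"
  show "c (vadd p m (vscale p 1 w)) * P (vadd p m (vscale p 1 w) i0) *
         u (vadd p (vadd p m (vscale p 1 w)) (vadd p d (vscale p 0 w))) *
         u (vadd p (vadd p m (vscale p 1 w)) (vadd p (vadd p d (vscale p 0 w)) (vadd p d (vscale p 0 w)))) =
        c m * u (vadd p m d) * u (vadd p m (vadd p d d)) * P (m i0 + 1 * w i0)"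
    using m d w by (simp del: vscale_zero vscale_one add: shsimps inv_shift[OF iu] inv_shift[OF ic] mult_ac)
qed (use p_gt1 in simp)

lemma T1': assumes iu: "inv u" and ic: "inv c"
  shows "Tri n (\<lambda>x. c x * P (x i0)) u u = 0"
  unfolding Tri_def
  by (rule Mvanish[where a=1 and b=0 and k=1 and R="\<lambda>m d. c m * u (vadd p m d) * u (vadd p m (vadd p d d))" and Z="\<lambda>m d. m i0"])
     (use p_gt1 in \<open>simp_all del: vscale_zero vscale_one add: shsimps inv_shift[OF iu] inv_shift[OF ic] mult_ac\<close>)

lemma T2: assumes iu: "inv u" and ic: "inv c"
  shows "Tri n u (\<lambda>x. c x * P (x i0)) u = 0"
  unfolding Tri_def
  by (rule Mvanish[where a=1 and b=0 and k=1 and R="\<lambda>m d. u m * c (vadd p m d) * u (vadd p m (vadd p d d))" and Z="\<lambda>m d. m i0 + d i0"])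
     (use p_gt1 in \<open>simp_all del: vscale_zero vscale_one add: shsimps inv_shift[OF iu] inv_shift[OF ic] mult_ac\<close>)

lemma T3: assumes iu: "inv u" and ic: "inv c"
  shows "Tri n u u (\<lambda>x. c x * P (x i0)) = 0"
  unfolding Tri_def
  by (rule Mvanish[where a=1 and b=0 and k=1 and R="\<lambda>m d. u m * u (vadd p m d) * c (vadd p m (vadd p d d))" and Z="\<lambda>m d. m i0 + (d i0 + d i0)"])
     (use p_gt1 in \<open>simp_all del: vscale_zero vscale_one add: shsimps inv_shift[OF iu] inv_shift[OF ic] mult_ac\<close>)

lemma T4: assumes iu: "inv u" and ic: "inv c"
  shows "Tri n (\<lambda>x. c x * P (x i0)) (\<lambda>x. c x * P (x i0)) u = 0"
  unfolding Tri_def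
  by (rule Mvanish[where a=1 and b="-1" and k=1 and R="\<lambda>m d. c m * c (vadd p m d) * P (m i0 + d i0) * u (vadd p m (vadd p d d))" and Z="\<lambda>m d. m i0"])
     (use p_gt1 in \<open>simp_all del: vscale_zero vscale_one add: shsimps inv_shift[OF iu] inv_shift[OF ic] mult_ac\<close>)

lemma T5: assumes iu: "inv u" and ic: "inv c"
  shows "Tri n (\<lambda>x. c x * P (x i0)) u (\<lambda>x. c x * P (x i0)) = 0"
  unfolding Tri_def
  by (rule Mvanish[where a="-2" and b=1 and k="-2" and R="\<lambda>m d. c m * u (vadd p m d) * c (vadd p m (vadd p d d)) * P (m i0 + (d i0 + d i0))" and Z="\<lambda>m d. m i0"])
     (use neg_two_unit in \<open>simp_all del: vscale_zero vscale_one add: shsimps inv_shift[OF iu] inv_shift[OF ic] mult_ac\<close>)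

lemma T6: assumes iu: "inv u" and ic: "inv c"
  shows "Tri n u (\<lambda>x. c x * P (x i0)) (\<lambda>x. c x * P (x i0)) = 0"
  unfolding Tri_def
  by (rule Mvanish[where a="-2" and b=1 and k="-1" and R="\<lambda>m d. u m * c (vadd p m d) * c (vadd p m (vadd p d d)) * P (m i0 + (d i0 + d i0))" and Z="\<lambda>m d. m i0 + d i0"])
     (use neg_one_unit in \<open>simp_all del: vscale_zero vscale_one add: shsimps inv_shift[OF iu] inv_shift[OF ic] mult_ac\<close>)

end

lemma (in oddp) I1: "vadd p (vadd p m w1) (vadd p d w2) = vadd p (vadd p m d) (vadd p w1 w2)"
  by (rule ext) (simp only: vadd_def, simp add: mod_simps, (simp add: algebra_simps)?)
lemma (in oddp) I2: "vadd p (vadd p m w1) (vadd p (vadd p d w2) (vadd p d w2)) = vadd p (vadd p m (vadd p d d)) (vadd p w1 (vadd p w2 w2))"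
  by (rule ext) (simp only: vadd_def, simp add: mod_simps, (simp add: algebra_simps)?)

lemma swap4: "(\<Sum>a\<in>A. \<Sum>b\<in>B. \<Sum>c\<in>C. \<Sum>d\<in>D. (f a b c d :: real)) = (\<Sum>c\<in>C. \<Sum>d\<in>D. \<Sum>a\<in>A. \<Sum>b\<in>B. f a b c d)"
proof -
  have "(\<Sum>a\<in>A. \<Sum>b\<in>B. \<Sum>c\<in>C. \<Sum>d\<in>D. f a b c d) = (\<Sum>a\<in>A. \<Sum>c\<in>C. \<Sum>b\<in>B. \<Sum>d\<in>D. f a b c d)"
    by (rule sum.cong[OF refl], rule sum.swap)
  also have "\<dots> = (\<Sum>a\<in>A. \<Sum>c\<in>C. \<Sum>d\<in>D. \<Sum>b\<in>B. f a b c d)"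
    by (rule sum.cong[OF refl], rule sum.cong[OF refl], rule sum.swap)
  also have "\<dots> = (\<Sum>c\<in>C. \<Sum>a\<in>A. \<Sum>d\<in>D. \<Sum>b\<in>B. f a b c d)" by (rule sum.swap)
  also have "\<dots> = (\<Sum>c\<in>C. \<Sum>d\<in>D. \<Sum>a\<in>A. \<Sum>b\<in>B. f a b c d)"
    by (rule sum.cong[OF refl], rule sum.swap)
  finally show ?thesis .
qed

context pert begin

definition Lc :: real where
  "Lc = (\<Sum>s\<in>{0..<int p}. \<Sum>t\<in>{0..<int p}. P s * P (s + t) * P (s + 2 * t)) / real p ^ 2"

lemma T7: assumes ic: "inv c"
  shows "Tri n (\<lambda>x. c x * P (x i0)) (\<lambda>x. c x * P (x i0)) (\<lambda>x. c x * P (x i0)) = Lc * Tri n c c c"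
proof -
  define K where "K = real (card W)"
  have K0: "K > 0" unfolding K_def using subsp_card_pos[OF W] by simp
  define G where "G = (\<lambda>m d. (c m * P (m i0)) * (c (vadd p m d) * P (vadd p m d i0)) * (c (vadd p m (vadd p d d)) * P (vadd p m (vadd p d d) i0)))"
  define C where "C = (\<lambda>m d. c m * c (vadd p m d) * c (vadd p m (vadd p d d)))"
  define Hm where "Hm = (\<lambda>m d s t. P (s + m i0) * P (s + ((m i0 + d i0) + t)) * P (s + ((m i0 + (d i0 + d i0)) + 2 * t)))"
  have T: "Tri n (\<lambda>x. c x * P (x i0)) (\<lambda>x. c x * P (x i0)) (\<lambda>x. c x * P (x i0)) = (\<Sum>m\<in>vecs p n. \<Sum>d\<in>vecs p n. G m d)"
    unfolding Tri_def G_def ..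
  have TC: "Tri n c c c = (\<Sum>m\<in>vecs p n. \<Sum>d\<in>vecs p n. C m d)" unfolding Tri_def C_def ..
  have Gsh: "\<And>m d w1 w2. m \<in> vecs p n \<Longrightarrow> d \<in> vecs p n \<Longrightarrow> w1 \<in> W \<Longrightarrow> w2 \<in> W \<Longrightarrow>
     G (vadd p m w1) (vadd p d w2) = C m d * Hm m d (w1 i0) (w2 i0)"
  proof -
    fix m d w1 w2 assume m: "m \<in> vecs p n" and d: "d \<in> vecs p n" and w1: "w1 \<in> W" and w2: "w2 \<in> W"
    have a: "vadd p w1 w2 \<in> W" using subsp_add[OF W w1 w2] .
    have b: "vadd p w1 (vadd p w2 w2) \<in> W" using subsp_add[OF W w1 subsp_add[OF W w2 w2]] .
    have c1: "c (vadd p m w1) = c m" using inv_add[OF ic m w1] .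
    have c2: "c (vadd p (vadd p m w1) (vadd p d w2)) = c (vadd p m d)"
      unfolding I1 using inv_add[OF ic _ a] m d by simp
    have c3: "c (vadd p (vadd p m w1) (vadd p (vadd p d w2) (vadd p d w2))) = c (vadd p m (vadd p d d))"
      unfolding I2 using inv_add[OF ic _ b] m d by simp
    have p1: "P (vadd p m w1 i0) = P (w1 i0 + m i0)"
      by (simp add: vadd_apply per_mod[OF P] add.commute)
    have p2: "P (vadd p (vadd p m w1) (vadd p d w2) i0) = P (w1 i0 + ((m i0 + d i0) + w2 i0))"
      by (simp add: vadd_apply mod_simps per_mod[OF P]) (simp add: algebra_simps)
    have p3: "P (vadd p (vadd p m w1) (vadd p (vadd p d w2) (vadd p d w2)) i0) = P (w1 i0 + ((m i0 + (d i0 + d i0)) + 2 * w2 i0))"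
      by (simp add: vadd_apply mod_simps per_mod[OF P]) (simp add: algebra_simps)
    show "G (vadd p m w1) (vadd p d w2) = C m d * Hm m d (w1 i0) (w2 i0)"
      unfolding G_def C_def Hm_def c1 c2 c3 p1 p2 p3 by (simp add: mult_ac)
  qed
  have sh: "\<And>w1 w2. w1 \<in> W \<Longrightarrow> w2 \<in> W \<Longrightarrow> (\<Sum>m\<in>vecs p n. \<Sum>d\<in>vecs p n. G m d)
     = (\<Sum>m\<in>vecs p n. \<Sum>d\<in>vecs p n. C m d * Hm m d (w1 i0) (w2 i0))"
  proof -
    fix w1 w2 assume w1: "w1 \<in> W" and w2: "w2 \<in> W"
    have "(\<Sum>m\<in>vecs p n. \<Sum>d\<in>vecs p n. G m d) = (\<Sum>m\<in>vecs p n. \<Sum>d\<in>vecs p n. G m (vadd p w2 d))"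
      by (rule sum.cong[OF refl]) (rule sum_shift[OF wv[OF w2], symmetric])
    also have "\<dots> = (\<Sum>m\<in>vecs p n. \<Sum>d\<in>vecs p n. G (vadd p w1 m) (vadd p w2 d))"
      using sum_shift[OF wv[OF w1], of "\<lambda>m. \<Sum>d\<in>vecs p n. G m (vadd p w2 d)"] by simp
    also have "\<dots> = (\<Sum>m\<in>vecs p n. \<Sum>d\<in>vecs p n. C m d * Hm m d (w1 i0) (w2 i0))"
      by (intro sum.cong refl) (simp add: vadd_comm[of w1] vadd_comm[of w2] Gsh w1 w2)
    finally show "?thesis w1 w2" .
  qed
  have inner: "\<And>m d. (\<Sum>w1\<in>W. \<Sum>w2\<in>W. Hm m d (w1 i0) (w2 i0)) = (K / real p) ^ 2 * (real p ^ 2 * Lc)"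
  proof -
    fix m d
    have "(\<Sum>w1\<in>W. \<Sum>w2\<in>W. Hm m d (w1 i0) (w2 i0)) = (\<Sum>w1\<in>W. K / real p * (\<Sum>t\<in>{0..<int p}. Hm m d (w1 i0) t))"
      unfolding K_def by (rule sum.cong[OF refl]) (rule sum_coord_W[OF W w0 a0])
    also have "\<dots> = K / real p * (\<Sum>w1\<in>W. (\<lambda>s. \<Sum>t\<in>{0..<int p}. Hm m d s t) (w1 i0))"
      by (simp add: sum_distrib_left)
    also have "\<dots> = K / real p * (K / real p * (\<Sum>s\<in>{0..<int p}. \<Sum>t\<in>{0..<int p}. Hm m d s t))"
      unfolding K_def by (subst sum_coord_W[OF W w0 a0]) simp
    also have "(\<Sum>s\<in>{0..<int p}. \<Sum>t\<in>{0..<int p}. Hm m d s t) = real p ^ 2 * Lc"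
    proof -
      have "(\<Sum>s\<in>{0..<int p}. \<Sum>t\<in>{0..<int p}. Hm m d s t)
          = (\<Sum>s\<in>{0..<int p}. \<Sum>t\<in>{0..<int p}. P s * P (s + t) * P (s + 2 * t))"
        unfolding Hm_def by (rule ZpL[OF P]) simp
      then show ?thesis unfolding Lc_def using p_gt1 by simp
    qed
    finally show "?thesis m d" by (simp add: power2_eq_square)
  qed
  have "K * K * (\<Sum>m\<in>vecs p n. \<Sum>d\<in>vecs p n. G m d) = (\<Sum>w1\<in>W. \<Sum>w2\<in>W. (\<Sum>m\<in>vecs p n. \<Sum>d\<in>vecs p n. G m d))"
    unfolding K_def by simp
  also have "\<dots> = (\<Sum>w1\<in>W. \<Sum>w2\<in>W. \<Sum>m\<in>vecs p n. \<Sum>d\<in>vecs p n. C m d * Hm m d (w1 i0) (w2 i0))"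
  proof (rule sum.cong[OF refl])
    fix w1 assume w1: "w1 \<in> W"
    show "(\<Sum>w2\<in>W. \<Sum>m\<in>vecs p n. \<Sum>d\<in>vecs p n. G m d) = (\<Sum>w2\<in>W. \<Sum>m\<in>vecs p n. \<Sum>d\<in>vecs p n. C m d * Hm m d (w1 i0) (w2 i0))"
      by (rule sum.cong[OF refl]) (erule sh[OF w1])
  qed
  also have "\<dots> = (\<Sum>m\<in>vecs p n. \<Sum>d\<in>vecs p n. \<Sum>w1\<in>W. \<Sum>w2\<in>W. C m d * Hm m d (w1 i0) (w2 i0))"
    by (rule swap4)
  also have "\<dots> = (\<Sum>m\<in>vecs p n. \<Sum>d\<in>vecs p n. C m d * ((K / real p) ^ 2 * (real p ^ 2 * Lc)))"
    by (intro sum.cong refl) (simp add: sum_distrib_left[symmetric] inner)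
  also have "\<dots> = K * K * (Lc * (\<Sum>m\<in>vecs p n. \<Sum>d\<in>vecs p n. C m d))"
    using p_gt1 by (simp add: sum_distrib_right sum_distrib_left power2_eq_square field_simps)
  finally have "(\<Sum>m\<in>vecs p n. \<Sum>d\<in>vecs p n. G m d) = Lc * (\<Sum>m\<in>vecs p n. \<Sum>d\<in>vecs p n. C m d)"
    using K0 by simp
  then show ?thesis unfolding T TC .
qed

end

context pert begin

lemma perturb: assumes iu: "inv u" and ic: "inv c"
  shows "Tri n (\<lambda>x. u x + c x * P (x i0)) (\<lambda>x. u x + c x * P (x i0)) (\<lambda>x. u x + c x * P (x i0))
       = Tri n u u u + Lc * Tri n c c c"
proof -
  define f where "f = (\<lambda>x. c x * P (x i0))"
  have "Tri n (\<lambda>x. u x + f x) (\<lambda>x. u x + f x) (\<lambda>x. u x + f x)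
      = Tri n u u u + Tri n u u f + Tri n u f u + Tri n u f f + Tri n f u u + Tri n f u f + Tri n f f u + Tri n f f f"
    by (simp only: Tri_add1 Tri_add2 Tri_add3 add.assoc)
  also have "\<dots> = Tri n u u u + Lc * Tri n c c c"
    unfolding f_def using T1'[OF iu ic] T2[OF iu ic] T3[OF iu ic] T4[OF iu ic] T5[OF iu ic] T6[OF iu ic] T7[OF ic]
    by simp
  finally show ?thesis unfolding f_def .
qed

lemma mean_zero: assumes ic: "inv c"
  shows "(\<Sum>x\<in>vecs p n. c x * P (x i0)) = 0"
proof -
  have "(\<Sum>m\<in>vecs p n. \<Sum>d\<in>vecs p n. c m * P (m i0)) = 0"
    by (rule Mvanish[where a=1 and b=0 and k=1 and R="\<lambda>m d. c m" and Z="\<lambda>m d. m i0"])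
       (use p_gt1 in \<open>simp_all del: vscale_zero vscale_one add: shsimps inv_shift[OF ic]\<close>)
  then have "real (p ^ n) * (\<Sum>x\<in>vecs p n. c x * P (x i0)) = 0"
    by (simp add: card_vecs sum_distrib_left mult.commute)
  then show ?thesis using p_gt1 by simp
qed

end

context oddp begin

definition Ind :: "int set \<Rightarrow> int \<Rightarrow> real" where
  "Ind A t = (if t mod int p \<in> A then 1 else 0)"
definition PA :: "int set \<Rightarrow> int \<Rightarrow> real" where
  "PA A t = real (card A) / real p - Ind A t"

lemma Ind_per: "Ind A (x mod int p) = Ind A x" unfolding Ind_def by simp
lemma Ind_per_left: "Ind A (x mod int p + y) = Ind A (x + y)" unfolding Ind_def by (simp add: mod_simps)
lemma PA_periodic: "periodic (PA A)" unfolding periodic_def PA_def by (simp add: Ind_per)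

lemma sum_Ind: assumes A: "A \<subseteq> {0..<int p}" shows "(\<Sum>t\<in>{0..<int p}. Ind A t) = real (card A)"
proof -
  have "(\<Sum>t\<in>{0..<int p}. Ind A t) = (\<Sum>t\<in>{0..<int p}. if t \<in> A then 1 else 0)"
    unfolding Ind_def by (intro sum.cong refl) simp
  also have "\<dots> = real (card ({0..<int p} \<inter> A))" by (simp add: sum.If_cases)
  also have "{0..<int p} \<inter> A = A" using A by blast
  finally show ?thesis .
qed

lemma sum_Ind_aff: assumes A: "A \<subseteq> {0..<int p}" and a: "a mod int p \<noteq> 0"
  shows "(\<Sum>t\<in>{0..<int p}. Ind A (b + a * t)) = real (card A)"
proof -
  have "(\<Sum>t\<in>{0..<int p}. Ind A (b + a * t)) = (\<Sum>t\<in>{0..<int p}. Ind A ((b + a * t) mod int p))"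
    by (simp add: Ind_per)
  also have "\<dots> = (\<Sum>t\<in>{0..<int p}. Ind A t)" by (rule sum_affine_Zp[OF a])
  finally show ?thesis using sum_Ind[OF A] by simp
qed

lemma PA_sum: assumes A: "A \<subseteq> {0..<int p}" shows "(\<Sum>t\<in>{0..<int p}. PA A t) = 0"
  unfolding PA_def using sum_Ind[OF A] p_gt1 by (simp add: sum_subtractf)

definition T3 :: "int set \<Rightarrow> real" where
  "T3 A = (\<Sum>s\<in>{0..<int p}. \<Sum>t\<in>{0..<int p}. Ind A s * Ind A (s + t) * Ind A (s + 2 * t))"

lemma PA_cube: assumes A: "A \<subseteq> {0..<int p}"
  shows "(\<Sum>s\<in>{0..<int p}. \<Sum>t\<in>{0..<int p}. PA A s * PA A (s + t) * PA A (s + 2 * t))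
       = real (card A) ^ 3 / real p - T3 A"
proof -
  define b where "b = real (card A) / real p"
  define k where "k = real (card A)"
  define Z where "Z = {0..<int p}"
  have pz: "real p \<noteq> 0" using p_gt1 by simp
  have one: "\<And>a c. a mod int p \<noteq> 0 \<Longrightarrow> (\<Sum>t\<in>Z. Ind A (c + a * t)) = k"
    unfolding Z_def k_def by (rule sum_Ind_aff[OF A])
  have u: "(1::int) mod int p \<noteq> 0" using p_gt1 by simp
  have S0: "(\<Sum>t\<in>Z. Ind A t) = k" unfolding Z_def k_def by (rule sum_Ind[OF A])
  have S1a: "(\<Sum>s\<in>Z. \<Sum>t\<in>Z. Ind A s) = real p * k" using S0 unfolding Z_def by (simp add: sum_distrib_left[symmetric])
  have S1b: "(\<Sum>s\<in>Z. \<Sum>t\<in>Z. Ind A (s + t)) = real p * k"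
    using one[OF u] unfolding Z_def by simp
  have S1c: "(\<Sum>s\<in>Z. \<Sum>t\<in>Z. Ind A (s + 2 * t)) = real p * k"
    using one[OF two_unit] unfolding Z_def by simp
  have S2a: "(\<Sum>s\<in>Z. \<Sum>t\<in>Z. Ind A s * Ind A (s + t)) = k * k"
    using one[OF u] S0 by (simp add: sum_distrib_left[symmetric] sum_distrib_right[symmetric])
  have S2b: "(\<Sum>s\<in>Z. \<Sum>t\<in>Z. Ind A s * Ind A (s + 2 * t)) = k * k"
    using one[OF two_unit] S0 by (simp add: sum_distrib_left[symmetric] sum_distrib_right[symmetric])
  have S2c: "(\<Sum>s\<in>Z. \<Sum>t\<in>Z. Ind A (s + t) * Ind A (s + 2 * t)) = k * k"
  proof -
    have "(\<Sum>s\<in>Z. \<Sum>t\<in>Z. Ind A (s + t) * Ind A (s + 2 * t)) = (\<Sum>t\<in>Z. \<Sum>s\<in>Z. Ind A (s + t) * Ind A (s + 2 * t))"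
      by (rule sum.swap)
    also have "\<dots> = (\<Sum>t\<in>Z. \<Sum>s\<in>Z. Ind A s * Ind A (s + t))"
    proof (rule sum.cong[OF refl])
      fix t
      define G where "G = (\<lambda>s. Ind A s * Ind A (s + t))"
      have per: "\<And>x. G (x mod int p) = G x" unfolding G_def by (simp only: Ind_per Ind_per_left)
      have "(\<Sum>s\<in>Z. Ind A (s + t) * Ind A (s + 2 * t)) = (\<Sum>s\<in>Z. G (t + s))"
        unfolding G_def by (intro sum.cong refl) (simp add: algebra_simps)
      also have "\<dots> = (\<Sum>s\<in>Z. G s)" unfolding Z_def by (rule shift_Zp[where G=G, OF per])
      finally show "(\<Sum>s\<in>Z. Ind A (s + t) * Ind A (s + 2 * t)) = (\<Sum>s\<in>Z. Ind A s * Ind A (s + t))"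
        unfolding G_def .
    qed
    also have "\<dots> = (\<Sum>s\<in>Z. \<Sum>t\<in>Z. Ind A s * Ind A (s + t))" by (rule sum.swap)
    finally show ?thesis using S2a by simp
  qed
  have cZ: "real (card Z) = real p" unfolding Z_def by simp
  have T3Z: "(\<Sum>s\<in>Z. \<Sum>t\<in>Z. Ind A s * Ind A (s + t) * Ind A (s + 2 * t)) = T3 A"
    unfolding T3_def Z_def ..
  have pt: "\<And>s t. PA A s * PA A (s + t) * PA A (s + 2 * t) =
      b^3 - b^2 * Ind A s - b^2 * Ind A (s + t) - b^2 * Ind A (s + 2 * t)
      + b * (Ind A s * Ind A (s + t)) + b * (Ind A s * Ind A (s + 2 * t)) + b * (Ind A (s + t) * Ind A (s + 2 * t))
      - Ind A s * Ind A (s + t) * Ind A (s + 2 * t)"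
    unfolding PA_def b_def[symmetric] by (simp add: algebra_simps power2_eq_square power3_eq_cube)
  have "(\<Sum>s\<in>Z. \<Sum>t\<in>Z. PA A s * PA A (s + t) * PA A (s + 2 * t))
     = (\<Sum>s\<in>Z. \<Sum>t\<in>Z. b^3) - b^2 * (\<Sum>s\<in>Z. \<Sum>t\<in>Z. Ind A s) - b^2 * (\<Sum>s\<in>Z. \<Sum>t\<in>Z. Ind A (s + t))
       - b^2 * (\<Sum>s\<in>Z. \<Sum>t\<in>Z. Ind A (s + 2 * t))
       + b * (\<Sum>s\<in>Z. \<Sum>t\<in>Z. Ind A s * Ind A (s + t)) + b * (\<Sum>s\<in>Z. \<Sum>t\<in>Z. Ind A s * Ind A (s + 2 * t))
       + b * (\<Sum>s\<in>Z. \<Sum>t\<in>Z. Ind A (s + t) * Ind A (s + 2 * t))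
       - (\<Sum>s\<in>Z. \<Sum>t\<in>Z. Ind A s * Ind A (s + t) * Ind A (s + 2 * t))"
    unfolding pt by (simp add: sum.distrib sum_subtractf sum_distrib_left right_diff_distrib mult_ac)
  also have "\<dots> = real p * real p * b^3 - b^2 * (real p * k) - b^2 * (real p * k) - b^2 * (real p * k)
       + b * (k * k) + b * (k * k) + b * (k * k) - T3 A"
    unfolding S1a S1b S1c S2a S2b S2c T3Z using cZ by simp
  also have "\<dots> = k ^ 3 / real p - T3 A"
    unfolding b_def k_def using pz by (simp add: field_simps power2_eq_square power3_eq_cube)
  finally show ?thesis unfolding Z_def k_def .
qed

end

lemma tri_sum: "(\<Sum>t<m. (2*m - 2*t)) = m*(m+1::nat)"
proof (induction m)
  case 0 then show ?case by simp
next
  case (Suc m)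
  have "(\<Sum>t<Suc m. (2*Suc m - 2*t)) = (\<Sum>t<m. (2*m - 2*t) + 2) + 2"
    by (simp add: sum.lessThan_Suc) (intro sum.cong refl, simp)
  also have "\<dots> = m*(m+1) + 2*m + 2" unfolding sum.distrib Suc.IH by simp
  finally show ?case by simp
qed

context oddp begin

lemma Ind_nonneg: "Ind A t \<ge> 0" unfolding Ind_def by simp

lemma T3_term_nonneg: "Ind A s * Ind A (s + t) * Ind A (s + 2 * t) \<ge> 0"
  using Ind_nonneg by simp

lemma T3_point: "T3 {0} \<ge> 1"
proof -
  have z: "(0::int) \<in> {0..<int p}" using p_gt1 by simp
  have "(\<Sum>t\<in>{0..<int p}. Ind {0} 0 * Ind {0} (0 + t) * Ind {0} (0 + 2 * t)) \<le> T3 {0}"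
    unfolding T3_def
    by (rule member_le_sum[OF z, of "\<lambda>s. \<Sum>t\<in>{0..<int p}. Ind {0} s * Ind {0} (s + t) * Ind {0} (s + 2 * t)"])
       (auto simp: Ind_def intro!: sum_nonneg)
  moreover have "Ind {0} 0 * Ind {0} (0 + 0) * Ind {0} (0 + 2 * 0) \<le> (\<Sum>t\<in>{0..<int p}. Ind {0} 0 * Ind {0} (0 + t) * Ind {0} (0 + 2 * t))"
    by (rule member_le_sum[OF z, of "\<lambda>t. Ind {0} 0 * Ind {0} (0 + t) * Ind {0} (0 + 2 * t)"])
       (auto simp: Ind_def)
  moreover have "Ind {0} 0 * Ind {0} (0 + 0) * Ind {0} (0 + 2 * 0) = 1" unfolding Ind_def by simp
  ultimately show ?thesis by linarith
qed

lemma sum_int_sub: assumes "m \<le> p" and nn: "\<And>t. t \<in> {0..<int p} \<Longrightarrow> Y t \<ge> (0::real)"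
  shows "(\<Sum>t<m. Y (int t)) \<le> (\<Sum>t\<in>{0..<int p}. Y t)"
proof -
  have "(\<Sum>t<m. Y (int t)) = sum Y (int ` {..<m})" by (simp add: sum.reindex)
  also have "\<dots> \<le> (\<Sum>t\<in>{0..<int p}. Y t)"
    by (rule sum_mono2) (use assms in auto)
  finally show ?thesis .
qed

lemma T3_interval: assumes m: "2 * m \<le> p"
  shows "T3 {0..<2 * int m} \<ge> real m ^ 2"
proof -
  define A where "A = {0..<2 * int m}"
  define X where "X = (\<lambda>s t. Ind A s * Ind A (s + t) * Ind A (s + 2 * t))"
  have Xnn: "\<And>s t. X s t \<ge> 0" unfolding X_def by (rule T3_term_nonneg)
  have "T3 A = (\<Sum>t\<in>{0..<int p}. \<Sum>s\<in>{0..<int p}. X s t)"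
    unfolding T3_def X_def by (rule sum.swap)
  also have "\<dots> \<ge> (\<Sum>t<m. \<Sum>s\<in>{0..<int p}. X s (int t))"
    by (rule sum_int_sub) (use m in \<open>auto intro: sum_nonneg Xnn\<close>)
  moreover have "(\<Sum>t<m. \<Sum>s\<in>{0..<int p}. X s (int t)) \<ge> (\<Sum>t<m. \<Sum>s<2*m - 2*t. X (int s) (int t))"
    by (rule sum_mono, rule sum_int_sub) (use m Xnn in auto)
  moreover have "(\<Sum>t<m. \<Sum>s<2*m - 2*t. X (int s) (int t)) = (\<Sum>t<m. \<Sum>s<2*m - 2*t. (1::real))"
  proof (intro sum.cong refl)
    fix t s assume t: "t \<in> {..<m}" and s: "s \<in> {..<2*m - 2*t}"
    have lt: "s + 2 * t < 2 * m" using t s by auto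
    have pm: "2 * m \<le> p" by (rule m)
    have i1: "int s mod int p = int s" using lt pm by simp
    have i2: "(int s + int t) mod int p = int s + int t" using lt pm by simp
    have i3: "(int s + 2 * int t) mod int p = int s + 2 * int t" using lt pm by simp
    show "X (int s) (int t) = 1" unfolding X_def Ind_def A_def i1 i2 i3 using lt by auto
  qed
  moreover have "(\<Sum>t<m. \<Sum>s<2*m - 2*t. (1::real)) = real (m * (m + 1))"
  proof -
    have "(\<Sum>t<m. \<Sum>s<2*m - 2*t. (1::real)) = (\<Sum>t<m. real (2*m - 2*t))" by simp
    also have "\<dots> = real (\<Sum>t<m. (2*m - 2*t))" by (rule of_nat_sum[symmetric])
    finally show ?thesis unfolding tri_sum .
  qed
  ultimately have "T3 A \<ge> real (m * (m + 1))" by linarith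
  moreover have "real (m * (m + 1)) \<ge> real m ^ 2" by (simp add: power2_eq_square algebra_simps)
  ultimately show ?thesis unfolding A_def by linarith
qed

end

context oddp begin

lemma A_choice: "\<exists>A. A \<subseteq> {0..<int p} \<and> real (card A) ^ 3 / real p - T3 A \<le> - real p / 64"
proof (cases "p \<le> 62")
  case True
  have p3: "real p \<ge> 3" using p_ge3 by simp
  have p62: "real p \<le> 62" using True by simp
  have sub: "{0::int} \<subseteq> {0..<int p}" using p_gt1 by simp
  have "(real p - 1) * (63 - real p) \<ge> 2 * 1" by (rule mult_mono) (use p3 p62 in auto)
  then have key: "real p * real p \<le> 64 * real p - 64" by (simp add: algebra_simps)
  have "1 / real p - T3 {0} \<le> 1 / real p - 1" using T3_point by simp
  also have "\<dots> \<le> - real p / 64"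
  proof -
    have "(1 / real p - 1) * (64 * real p) = 64 - 64 * real p" using p3 by (simp add: field_simps)
    also have "\<dots> \<le> - real p * real p" using key by simp
    finally have "(1 / real p - 1) * (64 * real p) \<le> (- real p / 64) * (64 * real p)" by simp
    then show ?thesis by (rule mult_right_le_imp_le) (use p3 in simp)
  qed
  finally show ?thesis using sub by (intro exI[of _ "{0}"]) simp
next
  case False
  define m where "m = p div 16"
  have m1: "16 * m \<le> p" unfolding m_def by simp
  have m2: "p < 16 * m + 16" unfolding m_def by simp
  have pm: "2 * m \<le> p" using m1 by simp
  define A where "A = {0..<2 * int m}"
  have sub: "A \<subseteq> {0..<int p}" unfolding A_def using pm by auto
  have cA: "card A = 2 * m" unfolding A_def by simp
  have T: "T3 A \<ge> real m ^ 2" unfolding A_def by (rule T3_interval[OF pm])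
  have rp: "real p \<ge> 63" using False by simp
  have r1: "16 * real m \<le> real p" using m1 by simp
  have r2: "real p - 15 \<le> 16 * real m" using m2 by simp
  have mpos: "real m \<ge> 3" using r2 rp by simp
  have "(real p - 19) * (real p - 19) \<ge> 44 * 44" by (rule mult_mono) (use rp in auto)
  then have "(real p - 15) * (real p - 15) \<ge> 8 * real p" by (simp add: algebra_simps)
  moreover have "(real p - 15) * (real p - 15) \<le> (16 * real m) * (16 * real m)"
    by (rule mult_mono) (use r2 rp in auto)
  ultimately have k1: "32 * real m ^ 2 \<ge> real p" by (simp add: power2_eq_square)
  have k2: "real p - 8 * real m \<ge> real p / 2" using r1 by simp
  have "real p * real p \<le> (32 * real m ^ 2) * real p" by (rule mult_right_mono[OF k1]) simp
  also have "\<dots> = 64 * real m ^ 2 * (real p / 2)" by simp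
  also have "\<dots> \<le> 64 * real m ^ 2 * (real p - 8 * real m)" by (rule mult_left_mono[OF k2]) simp
  finally have key: "real p * real p \<le> 64 * real m ^ 2 * (real p - 8 * real m)" .
  have "real (card A) ^ 3 / real p - T3 A \<le> 8 * real m ^ 3 / real p - real m ^ 2"
    using T unfolding cA by (simp add: power3_eq_cube)
  also have "\<dots> \<le> - real p / 64"
  proof -
    have "(8 * real m ^ 3 / real p - real m ^ 2) * (64 * real p) = 512 * real m ^ 3 - 64 * real m ^ 2 * real p"
      using rp by (simp add: field_simps power3_eq_cube power2_eq_square)
    also have "\<dots> = - (64 * real m ^ 2 * (real p - 8 * real m))" by (simp add: algebra_simps power3_eq_cube power2_eq_square)
    also have "\<dots> \<le> - (real p * real p)" using key by simp
    also have "\<dots> = (- real p / 64) * (64 * real p)" by simp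
    finally show ?thesis by (rule mult_right_le_imp_le) (use rp in simp)
  qed
  finally show ?thesis using sub by blast
qed

end

context oddp begin

definition lin :: "nat \<Rightarrow> nat \<Rightarrow> (nat \<Rightarrow> int) \<Rightarrow> (nat \<Rightarrow> int) \<Rightarrow> (nat \<Rightarrow> int)" where
  "lin n k M x = (\<lambda>i. if i < n then (\<Sum>j<k. x j * M (j * n + i)) mod int p else 0)"

lemma lin_vecs[simp]: "lin n k M x \<in> vecs p n"
  unfolding lin_def vecs_def using p_pos by auto

lemma sum_mod_add: "(\<Sum>j<k. x j * ((a j + b j) mod int p)) mod int p = ((\<Sum>j<k. x j * a j) mod int p + (\<Sum>j<k. x j * b j) mod int p) mod int p"
proof -
  have "(\<Sum>j<k. x j * ((a j + b j) mod int p)) mod int p = (\<Sum>j<k. (x j * ((a j + b j) mod int p)) mod int p) mod int p"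
    by (simp add: mod_sum_eq)
  also have "\<dots> = (\<Sum>j<k. (x j * (a j + b j)) mod int p) mod int p" by (simp add: mod_mult_right_eq)
  also have "\<dots> = (\<Sum>j<k. x j * (a j + b j)) mod int p" by (simp add: mod_sum_eq)
  also have "\<dots> = ((\<Sum>j<k. x j * a j) + (\<Sum>j<k. x j * b j)) mod int p" by (simp add: distrib_left sum.distrib)
  also have "\<dots> = ((\<Sum>j<k. x j * a j) mod int p + (\<Sum>j<k. x j * b j) mod int p) mod int p" by (simp add: mod_simps)
  finally show ?thesis .
qed

lemma lin_add_M: "lin n k (vadd p M0 M) y = vadd p (lin n k M0 y) (lin n k M y)"
proof (rule ext)
  fix i show "lin n k (vadd p M0 M) y i = vadd p (lin n k M0 y) (lin n k M y) i"
    unfolding lin_def vadd_def using sum_mod_add[of y "\<lambda>j. M0 (j * n + i)" "\<lambda>j. M (j * n + i)" k] by simp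
qed

lemma lin_add_x: "lin n k M (vadd p x y) = vadd p (lin n k M x) (lin n k M y)"
proof (rule ext)
  fix i
  have "(\<Sum>j<k. (x j + y j) mod int p * M (j * n + i)) mod int p
      = ((\<Sum>j<k. x j * M (j * n + i)) mod int p + (\<Sum>j<k. y j * M (j * n + i)) mod int p) mod int p"
    using sum_mod_add[of "\<lambda>j. M (j * n + i)" x y k] by (simp add: mult.commute)
  then show "lin n k M (vadd p x y) i = vadd p (lin n k M x) (lin n k M y) i"
    unfolding lin_def vadd_def by simp
qed

lemma inverse_mod: assumes "a mod int p \<noteq> 0" shows "\<exists>r. (r * a) mod int p = 1"
proof -
  have "\<not> int p dvd a" using assms by (simp add: dvd_eq_mod_eq_0)
  then have "coprime (int p) a" using prime_int by (simp add: prime_imp_coprime)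
  then have g: "gcd a (int p) = 1" by (simp add: coprime_iff_gcd_eq_1 gcd.commute)
  obtain u v where "u * a + v * int p = gcd a (int p)" using bezout_int by blast
  then have "u * a = 1 - v * int p" using g by simp
  moreover have "(1 - v * int p) mod int p = 1 mod int p" by (simp add: mod_eq_dvd_iff)
  ultimately have "(u * a) mod int p = 1" using p_gt1 by simp
  then show ?thesis by blast
qed

lemma lin_surj: assumes y: "y \<in> vecs p k" and y0: "y \<noteq> vzero" and d: "d \<in> vecs p n"
  shows "\<exists>M0\<in>vecs p (n * k). lin n k M0 y = d"
proof -
  have "\<exists>j<k. y j \<noteq> 0"
  proof (rule ccontr)
    assume h: "\<not> (\<exists>j<k. y j \<noteq> 0)"
    have "y = vzero"
    proof (rule ext)
      fix i show "y i = vzero i" using h vecs_out[OF y, of i] by (cases "i < k") (auto simp: vzero_def)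
    qed
    then show False using y0 by simp
  qed
  then obtain j0 where j0: "j0 < k" "y j0 \<noteq> 0" by blast
  have "y j0 mod int p \<noteq> 0" using j0(2) vecs_mod[OF y, of j0] by simp
  then obtain r where r: "(r * y j0) mod int p = 1" using inverse_mod by blast
  define M0 where "M0 = (\<lambda>idx. if idx < n * k \<and> idx div n = j0 then (r * d (idx mod n)) mod int p else 0)"
  have M0v: "M0 \<in> vecs p (n * k)" unfolding M0_def vecs_def using p_pos by auto
  have "lin n k M0 y = d"
  proof (rule ext)
    fix i show "lin n k M0 y i = d i"
    proof (cases "i < n")
      case False then show ?thesis unfolding lin_def using vecs_out[OF d, of i] by simp
    next
      case True
      have idx: "\<And>j. j < k \<Longrightarrow> j * n + i < n * k \<and> (j * n + i) div n = j \<and> (j * n + i) mod n = i"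
      proof -
        fix j assume jk: "j < k"
        have "j * n + i < j * n + n" using True by simp
        also have "\<dots> = (j + 1) * n" by simp
        also have "\<dots> \<le> k * n" using jk by (intro mult_right_mono) auto
        finally show "j * n + i < n * k \<and> (j * n + i) div n = j \<and> (j * n + i) mod n = i"
          using True by (simp add: mult.commute)
      qed
      have "(\<Sum>j<k. y j * M0 (j * n + i)) = (\<Sum>j<k. if j = j0 then y j0 * ((r * d i) mod int p) else 0)"
        by (intro sum.cong refl) (use True in \<open>auto simp: M0_def idx\<close>)
      also have "\<dots> = y j0 * ((r * d i) mod int p)" using j0(1) by simp
      finally have "lin n k M0 y i = (y j0 * ((r * d i) mod int p)) mod int p" unfolding lin_def using True by simp
      also have "\<dots> = ((r * y j0) * d i) mod int p" by (simp add: mod_simps mult_ac)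
      also have "\<dots> = (((r * y j0) mod int p) * d i) mod int p" by (simp add: mod_simps)
      also have "\<dots> = d i" using r vecs_mod[OF d] by simp
      finally show ?thesis .
    qed
  qed
  then show ?thesis using M0v by blast
qed

end

context oddp begin

definition indf :: "(nat \<Rightarrow> int) set \<Rightarrow> (nat \<Rightarrow> int) \<Rightarrow> real" where
  "indf S x = (if x \<in> S then 1 else 0)"

lemma indf_nonneg: "indf S x \<ge> 0" unfolding indf_def by simp

lemma avg_M: assumes y: "y \<in> vecs p k" and y0: "y \<noteq> vzero"
  shows "(\<Sum>M\<in>vecs p (n * k). H (lin n k M y)) = real (p ^ (n * k)) / real (p ^ n) * (\<Sum>d\<in>vecs p n. H d)"
proof -
  have sh: "\<And>d0. d0 \<in> vecs p n \<Longrightarrow> (\<Sum>M\<in>vecs p (n * k). H (lin n k M y)) = (\<Sum>M\<in>vecs p (n * k). H (vadd p d0 (lin n k M y)))"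
  proof -
    fix d0 assume d0: "d0 \<in> vecs p n"
    obtain M0 where M0: "M0 \<in> vecs p (n * k)" "lin n k M0 y = d0" using lin_surj[OF y y0 d0] by blast
    have "(\<Sum>M\<in>vecs p (n * k). H (lin n k M y)) = (\<Sum>M\<in>vecs p (n * k). H (lin n k (vadd p M0 M) y))"
      using sum_shift[OF M0(1), of "\<lambda>M. H (lin n k M y)"] by simp
    also have "\<dots> = (\<Sum>M\<in>vecs p (n * k). H (vadd p d0 (lin n k M y)))"
      unfolding lin_add_M M0(2) ..
    finally show "?thesis d0" .
  qed
  have "real (p ^ n) * (\<Sum>M\<in>vecs p (n * k). H (lin n k M y)) = (\<Sum>d0\<in>vecs p n. (\<Sum>M\<in>vecs p (n * k). H (lin n k M y)))"
    by (simp add: card_vecs)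
  also have "\<dots> = (\<Sum>d0\<in>vecs p n. \<Sum>M\<in>vecs p (n * k). H (vadd p d0 (lin n k M y)))"
    by (rule sum.cong[OF refl]) (rule sh)
  also have "\<dots> = (\<Sum>M\<in>vecs p (n * k). \<Sum>d0\<in>vecs p n. H (vadd p d0 (lin n k M y)))" by (rule sum.swap)
  also have "\<dots> = (\<Sum>M\<in>vecs p (n * k). \<Sum>d\<in>vecs p n. H d)"
  proof (rule sum.cong[OF refl])
    fix M
    show "(\<Sum>d0\<in>vecs p n. H (vadd p d0 (lin n k M y))) = (\<Sum>d\<in>vecs p n. H d)"
      using sum_shift[OF lin_vecs[of n k M y], of H] by (simp add: vadd_comm)
  qed
  also have "\<dots> = real (p ^ (n * k)) * (\<Sum>d\<in>vecs p n. H d)" by (simp add: card_vecs)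
  finally show ?thesis using Np_pos[of n] by (simp add: field_simps)
qed

definition cnt :: "nat \<Rightarrow> (nat \<Rightarrow> int) set \<Rightarrow> real" where
  "cnt k T = (\<Sum>x\<in>vecs p k. \<Sum>y\<in>vecs p k - {vzero}. indf T x * indf T (vadd p x y) * indf T (vadd p x (vadd p y y)))"

lemma cnt_nonneg: "cnt k T \<ge> 0"
  unfolding cnt_def by (intro sum_nonneg) (simp add: indf_nonneg)

lemma removal:
  assumes mc: "meshulam_const p c" and k: "k \<ge> 1"
  shows "T \<subseteq> vecs p k \<Longrightarrow> cnt k T \<ge> real (card T) - c * real p ^ k / real k"
proof (induction "card T" arbitrary: T rule: less_induct)
  case less
  show ?case
  proof (cases "real (card T) \<ge> c * real p ^ k / real k")
    case False
    then show ?thesis using cnt_nonneg[of k T] by simp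
  next
    case True
    obtain a d where a: "a \<in> T" and d: "d \<in> vecs p k" "d \<noteq> vzero"
      and ad: "vadd p a d \<in> T" "vadd p a (vadd p d d) \<in> T"
      using mc k less.prems True unfolding meshulam_const_def by blast
    define T' where "T' = T - {a}"
    have fT: "finite T" using finite_subset[OF less.prems finite_vecs] .
    have cT': "card T' = card T - 1" unfolding T'_def using a fT by simp
    have cT: "card T \<ge> 1" using a fT card_0_eq[OF fT] by (cases "card T") auto
    have sub': "T' \<subseteq> vecs p k" unfolding T'_def using less.prems by blast
    have IH: "cnt k T' \<ge> real (card T') - c * real p ^ k / real k"
      by (rule less.hyps) (use cT cT' sub' in auto)
    define F where "F = (\<lambda>S x y. indf S x * indf S (vadd p x y) * indf S (vadd p x (vadd p y y)))"
    have mono: "\<And>x y. F T' x y \<le> F T x y"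
      unfolding F_def indf_def T'_def by auto
    have av: "a \<in> vecs p k" using a less.prems by blast
    have dd: "d \<in> vecs p k - {vzero}" using d by blast
    have "cnt k T - cnt k T' = (\<Sum>x\<in>vecs p k. \<Sum>y\<in>vecs p k - {vzero}. F T x y - F T' x y)"
      unfolding cnt_def F_def by (simp add: sum_subtractf)
    also have "\<dots> \<ge> (\<Sum>y\<in>vecs p k - {vzero}. F T a y - F T' a y)"
      by (rule member_le_sum[OF av]) (auto intro!: sum_nonneg simp: mono)
    moreover have "(\<Sum>y\<in>vecs p k - {vzero}. F T a y - F T' a y) \<ge> F T a d - F T' a d"
      by (rule member_le_sum[OF dd]) (auto simp: mono)
    moreover have "F T a d - F T' a d = 1" unfolding F_def indf_def T'_def using a ad by simp
    ultimately have "cnt k T \<ge> cnt k T' + 1" by linarith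
    then show ?thesis using IH cT' cT by (simp add: of_nat_diff)
  qed
qed

end

context oddp begin

lemma Lambda3_nonneg: "(\<And>x. x \<in> vecs p n \<Longrightarrow> f x \<ge> 0) \<Longrightarrow> Lambda3 p n f \<ge> 0"
  unfolding Lambda3_def using p_gt1 by (intro divide_nonneg_pos sum_nonneg mult_nonneg_nonneg) auto

lemma card_filter_sum: "finite X \<Longrightarrow> real (card {x \<in> X. P x}) = (\<Sum>x\<in>X. if P x then 1 else 0)"
  by (simp add: sum.If_cases Int_def)

lemma varnavides:
  assumes mc: "meshulam_const p c" and k: "k \<ge> 1" and S: "S \<subseteq> vecs p n"
  shows "Lambda3 p n (indf S) \<ge> (real (card S) / real p ^ n - c / real k) / real p ^ k"
proof -
  define V where "V = vecs p n"
  define VM where "VM = vecs p (n * k)"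
  define Vk where "Vk = vecs p k"
  define Y where "Y = Vk - {vzero}"
  define N where "N = real (p ^ n)"
  define Q where "Q = real (p ^ (n * k))"
  define Phi where "Phi = (\<lambda>a M x. vadd p a (lin n k M x))"
  define G where "G = (\<lambda>m d. indf S m * indf S (vadd p m d) * indf S (vadd p m (vadd p d d)))"
  define Lam where "Lam = Lambda3 p n (indf S)"
  have N0: "N > 0" unfolding N_def using p_gt1 by simp
  have Q0: "Q > 0" unfolding Q_def using p_gt1 by simp
  have Lam_def2: "(\<Sum>m\<in>V. \<Sum>d\<in>V. G m d) = N * N * Lam"
    unfolding Lam_def Lambda3_def G_def V_def N_def using p_gt1
    by (simp add: power_mult power2_eq_square field_simps)
  have cY: "real (card Y) = real p ^ k - 1"
  proof -
    have "card Y = card Vk - 1" unfolding Y_def Vk_def by (simp add: card_Diff_singleton)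
    moreover have "1 \<le> p ^ k" using p_gt1 by simp
    ultimately show ?thesis unfolding Vk_def card_vecs by (simp add: of_nat_diff)
  qed
  have cVk: "real (card Vk) = real p ^ k" unfolding Vk_def card_vecs by simp
  have Phi_add: "\<And>a M x y. Phi a M (vadd p x y) = vadd p (Phi a M x) (lin n k M y)"
    unfolding Phi_def lin_add_x by (simp add: vadd_assoc)
  have Phi_add2: "\<And>a M x y. Phi a M (vadd p x (vadd p y y)) = vadd p (Phi a M x) (vadd p (lin n k M y) (lin n k M y))"
    unfolding Phi_def lin_add_x by (simp add: vadd_assoc)
  define T where "T = (\<lambda>a M. {x \<in> Vk. Phi a M x \<in> S})"
  have indT: "\<And>a M x. x \<in> Vk \<Longrightarrow> indf (T a M) x = indf S (Phi a M x)"
    unfolding T_def indf_def by simp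
  have cntT: "\<And>a M. cnt k (T a M) = (\<Sum>x\<in>Vk. \<Sum>y\<in>Y. G (Phi a M x) (lin n k M y))"
  proof -
    fix a M
    show "cnt k (T a M) = (\<Sum>x\<in>Vk. \<Sum>y\<in>Y. G (Phi a M x) (lin n k M y))"
      unfolding cnt_def Vk_def[symmetric] Y_def[symmetric]
    proof (intro sum.cong refl)
      fix x y assume x: "x \<in> Vk" and y: "y \<in> Y"
      have yv: "y \<in> Vk" using y unfolding Y_def by blast
      have xy: "vadd p x y \<in> Vk" "vadd p x (vadd p y y) \<in> Vk" using x yv unfolding Vk_def by auto
      show "indf (T a M) x * indf (T a M) (vadd p x y) * indf (T a M) (vadd p x (vadd p y y))
          = G (Phi a M x) (lin n k M y)"
        unfolding G_def indT[OF x] indT[OF xy(1)] indT[OF xy(2)] Phi_add Phi_add2 by (simp only: lin_add_x)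
    qed
  qed
  have inner: "\<And>x y. x \<in> Vk \<Longrightarrow> y \<in> Y \<Longrightarrow> (\<Sum>a\<in>V. \<Sum>M\<in>VM. G (Phi a M x) (lin n k M y)) = Q / N * (N * N * Lam)"
  proof -
    fix x y assume x: "x \<in> Vk" and y: "y \<in> Y"
    have yv: "y \<in> vecs p k" and y0: "y \<noteq> vzero" using y unfolding Y_def Vk_def by auto
    have "(\<Sum>a\<in>V. \<Sum>M\<in>VM. G (Phi a M x) (lin n k M y)) = (\<Sum>M\<in>VM. \<Sum>a\<in>V. G (vadd p a (lin n k M x)) (lin n k M y))"
      unfolding Phi_def by (rule sum.swap)
    also have "\<dots> = (\<Sum>M\<in>VM. \<Sum>m\<in>V. G m (lin n k M y))"
    proof (rule sum.cong[OF refl])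
      fix M
      show "(\<Sum>a\<in>V. G (vadd p a (lin n k M x)) (lin n k M y)) = (\<Sum>m\<in>V. G m (lin n k M y))"
        unfolding V_def using sum_shift[OF lin_vecs[of n k M x], of "\<lambda>m. G m (lin n k M y)"] by (simp add: vadd_comm)
    qed
    also have "\<dots> = Q / N * (\<Sum>d\<in>V. \<Sum>m\<in>V. G m d)"
      unfolding VM_def Q_def N_def V_def by (rule avg_M[OF yv y0])
    also have "(\<Sum>d\<in>V. \<Sum>m\<in>V. G m d) = (\<Sum>m\<in>V. \<Sum>d\<in>V. G m d)" by (rule sum.swap)
    finally show "?thesis x y" unfolding Lam_def2 .
  qed
  have sumcnt: "(\<Sum>a\<in>V. \<Sum>M\<in>VM. cnt k (T a M)) = (real p ^ k * (real p ^ k - 1)) * (Q * N * Lam)"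
  proof -
    have "(\<Sum>a\<in>V. \<Sum>M\<in>VM. cnt k (T a M)) = (\<Sum>a\<in>V. \<Sum>M\<in>VM. \<Sum>x\<in>Vk. \<Sum>y\<in>Y. G (Phi a M x) (lin n k M y))"
      by (simp add: cntT)
    also have "\<dots> = (\<Sum>x\<in>Vk. \<Sum>y\<in>Y. \<Sum>a\<in>V. \<Sum>M\<in>VM. G (Phi a M x) (lin n k M y))" by (rule swap4)
    also have "\<dots> = (\<Sum>x\<in>Vk. \<Sum>y\<in>Y. Q / N * (N * N * Lam))"
      by (intro sum.cong refl) (simp add: inner)
    also have "\<dots> = real (card Vk) * real (card Y) * (Q / N * (N * N * Lam))" by simp
    finally show ?thesis unfolding cVk cY using N0 by (simp add: field_simps)
  qed
  have sumcard: "(\<Sum>a\<in>V. \<Sum>M\<in>VM. real (card (T a M))) = real p ^ k * Q * real (card S)"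
  proof -
    have "(\<Sum>a\<in>V. \<Sum>M\<in>VM. real (card (T a M))) = (\<Sum>a\<in>V. \<Sum>M\<in>VM. \<Sum>x\<in>Vk. indf S (Phi a M x))"
      unfolding T_def indf_def Vk_def by (simp add: card_filter_sum)
    also have "\<dots> = (\<Sum>x\<in>Vk. \<Sum>M\<in>VM. \<Sum>a\<in>V. indf S (vadd p a (lin n k M x)))"
    proof -
      have "(\<Sum>a\<in>V. \<Sum>M\<in>VM. \<Sum>x\<in>Vk. indf S (Phi a M x)) = (\<Sum>a\<in>V. \<Sum>x\<in>Vk. \<Sum>M\<in>VM. indf S (Phi a M x))"
        by (rule sum.cong[OF refl], rule sum.swap)
      also have "\<dots> = (\<Sum>x\<in>Vk. \<Sum>a\<in>V. \<Sum>M\<in>VM. indf S (Phi a M x))" by (rule sum.swap)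
      also have "\<dots> = (\<Sum>x\<in>Vk. \<Sum>M\<in>VM. \<Sum>a\<in>V. indf S (Phi a M x))"
        by (rule sum.cong[OF refl], rule sum.swap)
      finally show ?thesis unfolding Phi_def .
    qed
    also have "\<dots> = (\<Sum>x\<in>Vk. \<Sum>M\<in>VM. real (card S))"
    proof (intro sum.cong refl)
      fix x M
      have "(\<Sum>a\<in>V. indf S (vadd p a (lin n k M x))) = (\<Sum>a\<in>V. indf S a)"
        unfolding V_def using sum_shift[OF lin_vecs[of n k M x], of "indf S"] by (simp add: vadd_comm)
      also have "\<dots> = real (card S)"
        unfolding indf_def V_def using S by (simp add: sum.If_cases Int_absorb1)
      finally show "(\<Sum>a\<in>V. indf S (vadd p a (lin n k M x))) = real (card S)" .
    qed
    also have "\<dots> = real (card Vk) * real (card VM) * real (card S)" by simp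
    finally show ?thesis unfolding cVk VM_def Q_def card_vecs by simp
  qed
  have "(\<Sum>a\<in>V. \<Sum>M\<in>VM. real (card (T a M)) - c * real p ^ k / real k) \<le> (\<Sum>a\<in>V. \<Sum>M\<in>VM. cnt k (T a M))"
  proof (intro sum_mono)
    fix a M
    have "T a M \<subseteq> vecs p k" unfolding T_def Vk_def by blast
    then show "real (card (T a M)) - c * real p ^ k / real k \<le> cnt k (T a M)"
      by (rule removal[OF mc k])
  qed
  moreover have "(\<Sum>a\<in>V. \<Sum>M\<in>VM. real (card (T a M)) - c * real p ^ k / real k)
      = real p ^ k * Q * real (card S) - N * Q * (c * real p ^ k / real k)"
    using sumcard unfolding N_def VM_def V_def Q_def by (simp add: sum_subtractf card_vecs)
  ultimately have ineq: "real p ^ k * Q * real (card S) - N * Q * (c * real p ^ k / real k)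
      \<le> (real p ^ k * (real p ^ k - 1)) * (Q * N * Lam)" unfolding sumcnt by simp
  have pk: "real p ^ k > 0" using p_gt1 by simp
  have "real (card S) / N - c / real k \<le> (real p ^ k - 1) * Lam"
  proof -
    have "(real (card S) / N - c / real k) * (real p ^ k * Q * N) = real p ^ k * Q * real (card S) - N * Q * (c * real p ^ k / real k)"
      using N0 by (simp add: field_simps)
    also have "\<dots> \<le> ((real p ^ k - 1) * Lam) * (real p ^ k * Q * N)" using ineq by (simp add: mult_ac)
    finally show ?thesis using pk Q0 N0 by (simp add: mult_le_cancel_right)
  qed
  also have "\<dots> \<le> real p ^ k * Lam"
  proof -
    have "Lam \<ge> 0" unfolding Lam_def by (rule Lambda3_nonneg) (simp add: indf_nonneg)
    then show ?thesis by (simp add: algebra_simps)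
  qed
  finally have "real (card S) / N - c / real k \<le> real p ^ k * Lam" .
  then show ?thesis unfolding Lam_def N_def using pk by (simp add: field_simps)
qed

end

context oddp begin

lemma favg_inv: assumes W: "is_subspace p n W" and x: "x \<in> vecs p n" and w: "w \<in> W"
  shows "favg p W f (vadd p x w) = favg p W f x"
proof -
  have "(\<Sum>w'\<in>W. f (vadd p (vadd p x w) w')) = (\<Sum>w'\<in>W. f (vadd p x (vadd p w w')))"
    by (simp add: vadd_assoc)
  also have "\<dots> = (\<Sum>w'\<in>W. f (vadd p x w'))"
    by (rule sum_shift_W[OF W w, of "\<lambda>z. f (vadd p x z)"])
  finally show ?thesis unfolding favg_def by simp
qed

lemma favg_range: assumes W: "is_subspace p n W" and f01: "\<forall>x\<in>vecs p n. 0 \<le> f x \<and> f x \<le> 1"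
  and x: "x \<in> vecs p n"
  shows "0 \<le> favg p W f x \<and> favg p W f x \<le> 1"
proof -
  have K: "real (card W) > 0" using subsp_card_pos[OF W] by simp
  have mem: "\<And>w. w \<in> W \<Longrightarrow> vadd p x w \<in> vecs p n" using x subsp_in[OF W] by simp
  have "0 \<le> (\<Sum>w\<in>W. f (vadd p x w))" by (rule sum_nonneg) (use f01 mem in auto)
  moreover have "(\<Sum>w\<in>W. f (vadd p x w)) \<le> (\<Sum>w\<in>W. 1)" by (rule sum_mono) (use f01 mem in auto)
  ultimately show ?thesis unfolding favg_def using K by (simp add: divide_le_eq_1)
qed

lemma inv_avg: assumes W: "is_subspace p n W" and v: "\<forall>x\<in>vecs p n. \<forall>w\<in>W. v (vadd p x w) = v x"
  shows "(\<Sum>x\<in>vecs p n. v x * f x) = (\<Sum>x\<in>vecs p n. v x * favg p W f x)"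
proof -
  define K where "K = real (card W)"
  have K0: "K > 0" unfolding K_def using subsp_card_pos[OF W] by simp
  have "K * (\<Sum>x\<in>vecs p n. v x * favg p W f x) = (\<Sum>x\<in>vecs p n. \<Sum>w\<in>W. v x * f (vadd p x w))"
    unfolding favg_def K_def using K0[unfolded K_def] by (simp add: sum_distrib_left sum_divide_distrib)
  also have "\<dots> = (\<Sum>w\<in>W. \<Sum>x\<in>vecs p n. v x * f (vadd p x w))" by (rule sum.swap)
  also have "\<dots> = (\<Sum>w\<in>W. \<Sum>x\<in>vecs p n. v x * f x)"
  proof (rule sum.cong[OF refl])
    fix w assume w: "w \<in> W"
    have wv: "w \<in> vecs p n" using subsp_in[OF W w] .
    have "(\<Sum>x\<in>vecs p n. v x * f (vadd p x w)) = (\<Sum>x\<in>vecs p n. v (vadd p x w) * f (vadd p x w))"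
      using v w by simp
    also have "\<dots> = (\<Sum>x\<in>vecs p n. v x * f x)"
      using sum_shift[OF wv, of "\<lambda>z. v z * f z"] by (simp add: vadd_comm)
    finally show "(\<Sum>x\<in>vecs p n. v x * f (vadd p x w)) = (\<Sum>x\<in>vecs p n. v x * f x)" .
  qed
  also have "\<dots> = K * (\<Sum>x\<in>vecs p n. v x * f x)" unfolding K_def by simp
  finally show ?thesis using K0 by simp
qed

lemma abs_bound: assumes W: "is_subspace p n W" and f01: "\<forall>x\<in>vecs p n. 0 \<le> f x \<and> f x \<le> 1"
  shows "(\<Sum>x\<in>vecs p n. \<bar>f x - favg p W f x\<bar>) \<le> 2 * (\<Sum>x\<in>vecs p n. favg p W f x * (1 - favg p W f x))"
proof -
  define u where "u = favg p W f"
  have u01: "\<And>x. x \<in> vecs p n \<Longrightarrow> 0 \<le> u x \<and> u x \<le> 1" unfolding u_def using favg_range[OF W f01] by blast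
  have uinv: "\<forall>x\<in>vecs p n. \<forall>w\<in>W. (1 - u (vadd p x w)) = 1 - u x"
    unfolding u_def using favg_inv[OF W] by simp
  have one: "\<forall>x\<in>vecs p n. \<forall>w\<in>W. (\<lambda>_. 1::real) (vadd p x w) = (\<lambda>_. 1) x" by simp
  have pt: "\<And>x. x \<in> vecs p n \<Longrightarrow> \<bar>f x - u x\<bar> \<le> 2 * ((1 - u x) * f x) - (f x - u x)"
  proof -
    fix x assume x: "x \<in> vecs p n"
    have a: "0 \<le> u x" "u x \<le> 1" "0 \<le> f x" "f x \<le> 1" using u01[OF x] f01 x by auto
    show "\<bar>f x - u x\<bar> \<le> 2 * ((1 - u x) * f x) - (f x - u x)"
    proof (cases "f x \<ge> u x")
      case True
      have "u x * (1 - f x) \<ge> 0" using a by simp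
      then show ?thesis using True by (simp add: algebra_simps)
    next
      case False
      have "(1 - u x) * f x \<ge> 0" using a by simp
      then show ?thesis using False by simp
    qed
  qed
  have "(\<Sum>x\<in>vecs p n. \<bar>f x - u x\<bar>) \<le> (\<Sum>x\<in>vecs p n. 2 * ((1 - u x) * f x) - (f x - u x))"
    by (rule sum_mono) (rule pt)
  also have "\<dots> = 2 * (\<Sum>x\<in>vecs p n. (1 - u x) * f x) - ((\<Sum>x\<in>vecs p n. 1 * f x) - (\<Sum>x\<in>vecs p n. 1 * u x))"
    by (simp add: sum_subtractf sum_distrib_left)
  also have "(\<Sum>x\<in>vecs p n. (1 - u x) * f x) = (\<Sum>x\<in>vecs p n. (1 - u x) * u x)"
    unfolding u_def by (rule inv_avg[OF W uinv[unfolded u_def]])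
  also have "(\<Sum>x\<in>vecs p n. 1 * f x) = (\<Sum>x\<in>vecs p n. 1 * u x)"
    unfolding u_def using inv_avg[OF W one, of f] by simp
  finally show ?thesis unfolding u_def by (simp add: mult.commute)
qed

lemma W_nontriv: assumes W: "is_subspace p n W"
  and ne: "(\<Sum>x\<in>vecs p n. \<bar>f x - favg p W f x\<bar>) \<noteq> 0"
  shows "\<exists>w0\<in>W. \<exists>i0. w0 i0 mod int p \<noteq> 0"
proof (rule ccontr)
  assume "\<not> (\<exists>w0\<in>W. \<exists>i0. w0 i0 mod int p \<noteq> 0)"
  then have z: "\<And>w i. w \<in> W \<Longrightarrow> w i mod int p = 0" by blast
  have "\<And>w. w \<in> W \<Longrightarrow> w = vzero"
  proof -
    fix w assume w: "w \<in> W"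
    show "w = vzero" using z[OF w] vecs_mod[OF subsp_in[OF W w]] by (auto simp: vzero_def)
  qed
  then have W0: "W = {vzero}" using subsp_zero[OF W] by blast
  have "\<And>x. x \<in> vecs p n \<Longrightarrow> favg p W f x = f x" unfolding favg_def W0 by simp
  then have "(\<Sum>x\<in>vecs p n. \<bar>f x - favg p W f x\<bar>) = 0" by simp
  then show False using ne by simp
qed

end

context oddp begin

lemma Lc_bound:
  assumes A: "A \<subseteq> {0..<int p}" and Ab: "real (card A) ^ 3 / real p - T3 A \<le> - real p / 64"
  shows "(\<Sum>s\<in>{0..<int p}. \<Sum>t\<in>{0..<int p}. PA A s * PA A (s + t) * PA A (s + 2 * t)) / real p ^ 2 \<le> - 1 / (64 * real p)"
proof -
  have p0: "real p > 0" using p_gt1 by simp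
  have "(\<Sum>s\<in>{0..<int p}. \<Sum>t\<in>{0..<int p}. PA A s * PA A (s + t) * PA A (s + 2 * t)) / real p ^ 2
      = (real (card A) ^ 3 / real p - T3 A) / real p ^ 2" unfolding PA_cube[OF A] ..
  also have "\<dots> \<le> (- real p / 64) / real p ^ 2" by (rule divide_right_mono[OF Ab]) simp
  also have "\<dots> = - 1 / (64 * real p)" using p0 by (simp add: power2_eq_square field_simps)
  finally show ?thesis .
qed

lemma powr_bound:
  assumes eps: "eps > 0" and c: "c > 0" and k: "real k \<le> 4 * c / eps + 1"
  shows "exp (- 16 / eps * c * ln (real p)) \<le> real p / real p ^ k"
proof -
  have p1: "real p \<ge> 1" using p_gt1 by simp
  have p0: "real p > 0" using p_gt1 by simp
  have "exp (- 16 / eps * c * ln (real p)) = real p powr (- 16 / eps * c)"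
    using p0 by (simp add: powr_def mult.commute)
  also have "\<dots> \<le> real p powr (1 - real k)"
  proof (rule powr_mono[OF _ p1])
    have "4 * c / eps \<le> 16 * c / eps" using eps c by (simp add: divide_right_mono)
    then show "- 16 / eps * c \<le> 1 - real k" using k by simp
  qed
  also have "\<dots> = real p / real p ^ k" using p0 by (simp add: powr_diff powr_realpow)
  finally show ?thesis .
qed

end

context oddp begin

lemma main:
  fixes n :: nat and eps c :: real and f :: "(nat \<Rightarrow> int) \<Rightarrow> real"
  assumes eps: "eps > 0" and c: "c > 0" and mc: "meshulam_const p c"
    and f01: "\<forall>m\<in>vecs p n. 0 \<le> f m \<and> f m \<le> 1"
    and hyp: "\<forall>W. is_subspace p n W \<and>
           real (codim p n W) \<le> 1 / (eps ^ 6 / (2 ^ 13 * real p ^ 2) * exp (- 16 / eps * c * ln (real p))) ^ 2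
           \<longrightarrow> expect p n (\<lambda>m. \<bar>f m - favg p W f m\<bar>) > eps"
  shows "\<exists>g :: (nat \<Rightarrow> int) \<Rightarrow> real. (\<forall>m\<in>vecs p n. 0 \<le> g m \<and> g m \<le> 1) \<and>
           expect p n g = expect p n f \<and>
           Lambda3 p n g < Lambda3 p n f - eps ^ 6 / (2 ^ 13 * real p ^ 2) * exp (- 16 / eps * c * ln (real p))"
proof -
  define X where "X = exp (- 16 / eps * c * ln (real p))"
  define D where "D = eps ^ 6 / (2 ^ 13 * real p ^ 2) * X"
  define N where "N = real p ^ n"
  have p0: "real p > 0" using p_gt1 by simp
  have N0: "N > 0" unfolding N_def using p0 by simp
  have X0: "X > 0" unfolding X_def by simp
  have D0: "D > 0" unfolding D_def using eps X0 p0 by simp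
  obtain W where W: "is_subspace p n W" and cod: "real (codim p n W) \<le> 1 / D\<^sup>2"
    and lamW: "Lambda3 p n (favg p W f) \<le> Lambda3 p n f + D"
    using fourier_step[OF D0 f01] by blast
  define u where "u = favg p W f"
  have E: "expect p n (\<lambda>m. \<bar>f m - u m\<bar>) > eps"
    using hyp W cod unfolding u_def D_def X_def by blast
  have u01: "\<And>x. x \<in> vecs p n \<Longrightarrow> 0 \<le> u x \<and> u x \<le> 1" unfolding u_def using favg_range[OF W f01] by blast
  have uinv: "\<And>x w. x \<in> vecs p n \<Longrightarrow> w \<in> W \<Longrightarrow> u (vadd p x w) = u x"
    unfolding u_def using favg_inv[OF W] by blast
  define SU where "SU = (\<Sum>x\<in>vecs p n. u x * (1 - u x))"
  have absb: "(\<Sum>x\<in>vecs p n. \<bar>f x - u x\<bar>) \<le> 2 * SU" unfolding SU_def u_def by (rule abs_bound[OF W f01])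
  have Eexp: "(\<Sum>x\<in>vecs p n. \<bar>f x - u x\<bar>) > eps * N"
    using E N0 unfolding expect_def N_def by (simp add: field_simps)
  have SU_big: "2 * SU > eps * N" using absb Eexp by linarith
  have SU_le: "SU \<le> N / 4"
  proof -
    have "SU \<le> (\<Sum>x\<in>vecs p n. 1 / 4)" unfolding SU_def
    proof (rule sum_mono)
      fix x assume "x \<in> vecs p n"
      have "0 \<le> (u x - 1/2)^2" by simp
      then show "u x * (1 - u x) \<le> 1 / 4" by (simp add: power2_eq_square algebra_simps)
    qed
    then show ?thesis unfolding N_def by (simp add: card_vecs)
  qed
  have "eps * N < (1 / 2) * N" using SU_big SU_le by linarith
  then have eps_half: "eps < 1 / 2" by (rule mult_right_less_imp_less) (use N0 in simp)
  have "eps * N > 0" using eps N0 by simp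
  then have ne: "(\<Sum>x\<in>vecs p n. \<bar>f x - favg p W f x\<bar>) \<noteq> 0" using Eexp unfolding u_def by linarith
  obtain w0 i0 where w0: "w0 \<in> W" and a0: "w0 i0 mod int p \<noteq> 0" using W_nontriv[OF W ne] by blast
  obtain A where A: "A \<subseteq> {0..<int p}" and Ab: "real (card A) ^ 3 / real p - T3 A \<le> - real p / 64"
    using A_choice by blast
  interpret pt: pert p n W w0 i0 "PA A"
    by unfold_locales (use W w0 a0 PA_periodic PA_sum[OF A] in auto)
  define cf where "cf = (\<lambda>x. min (u x) (1 - u x))"
  have iu: "pt.inv u" unfolding pt.inv_def using uinv by blast
  have ic: "pt.inv cf" unfolding pt.inv_def cf_def using uinv by simp
  define g where "g = (\<lambda>x. u x + cf x * PA A (x i0))"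
  define b where "b = real (card A) / real p"
  have cA: "card A \<le> p"
  proof -
    have "card A \<le> card {0..<int p}" by (rule card_mono) (use A in auto)
    then show ?thesis by simp
  qed
  have b01: "0 \<le> b" "b \<le> 1" unfolding b_def using cA p0 by (auto simp: divide_le_eq_1)
  have PAb: "\<And>t. b - 1 \<le> PA A t \<and> PA A t \<le> b" unfolding PA_def Ind_def b_def by auto
  have cf01: "\<And>x. x \<in> vecs p n \<Longrightarrow> 0 \<le> cf x \<and> cf x \<le> u x \<and> cf x \<le> 1 - u x"
    unfolding cf_def using u01 by auto
  have g01: "\<forall>m\<in>vecs p n. 0 \<le> g m \<and> g m \<le> 1"
  proof
    fix x assume x: "x \<in> vecs p n"
    have c0: "0 \<le> cf x" "cf x \<le> u x" "cf x \<le> 1 - u x" using cf01[OF x] by auto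
    have "cf x * PA A (x i0) \<le> cf x * b" using PAb c0 by (simp add: mult_left_mono)
    also have "\<dots> \<le> cf x" using b01 c0 by (simp add: mult_left_le)
    finally have up: "cf x * PA A (x i0) \<le> cf x" .
    have "cf x * (b - 1) \<le> cf x * PA A (x i0)" using PAb c0 by (simp add: mult_left_mono)
    moreover have "- cf x \<le> cf x * (b - 1)" using b01 c0 by (simp add: algebra_simps mult_left_le)
    ultimately have lo: "- cf x \<le> cf x * PA A (x i0)" by linarith
    show "0 \<le> g x \<and> g x \<le> 1" unfolding g_def using up lo c0 by linarith
  qed
  have one: "\<forall>x\<in>vecs p n. \<forall>w\<in>W. (\<lambda>_. 1::real) (vadd p x w) = (\<lambda>_. 1) x" by simp
  have Eg: "expect p n g = expect p n f"
  proof -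
    have "(\<Sum>x\<in>vecs p n. g x) = (\<Sum>x\<in>vecs p n. u x) + (\<Sum>x\<in>vecs p n. cf x * PA A (x i0))"
      unfolding g_def by (simp add: sum.distrib)
    also have "(\<Sum>x\<in>vecs p n. cf x * PA A (x i0)) = 0" by (rule pt.mean_zero[OF ic])
    also have "(\<Sum>x\<in>vecs p n. u x) = (\<Sum>x\<in>vecs p n. f x)"
      using inv_avg[OF W one, of f] unfolding u_def by simp
    finally show ?thesis unfolding expect_def by simp
  qed
  have Lg: "Lambda3 p n g = Lambda3 p n u + pt.Lc * Lambda3 p n cf"
    unfolding Lambda3_Tri g_def pt.perturb[OF iu ic] by (simp add: add_divide_distrib)
  have Lc_le: "pt.Lc \<le> - 1 / (64 * real p)"
    unfolding pt.Lc_def by (rule Lc_bound[OF A Ab])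
  define th where "th = eps / 4"
  have th0: "th > 0" unfolding th_def using eps by simp
  define S where "S = {x \<in> vecs p n. cf x \<ge> th}"
  have Ssub: "S \<subseteq> vecs p n" unfolding S_def by blast
  have cf_ge: "\<And>x. x \<in> vecs p n \<Longrightarrow> cf x \<ge> u x * (1 - u x)"
  proof -
    fix x assume x: "x \<in> vecs p n"
    have "u x * (1 - u x) \<le> u x" "u x * (1 - u x) \<le> 1 - u x" using u01[OF x]
      by (simp_all add: mult_left_le mult_left_le_one_le)
    then show "cf x \<ge> u x * (1 - u x)" unfolding cf_def by simp
  qed
  have sig: "real (card S) > eps / 2 * N"
  proof -
    have "SU \<le> (\<Sum>x\<in>vecs p n. cf x)" unfolding SU_def by (rule sum_mono) (rule cf_ge)
    also have "\<dots> \<le> (\<Sum>x\<in>vecs p n. 1 / 2 * indf S x + th)"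
    proof (rule sum_mono)
      fix x assume x: "x \<in> vecs p n"
      have "cf x \<le> 1 / 2" unfolding cf_def by (simp add: min_def)
      then show "cf x \<le> 1 / 2 * indf S x + th" unfolding indf_def S_def using x th0 by auto
    qed
    also have "\<dots> = 1 / 2 * real (card S) + N * th"
    proof -
      have cS: "(\<Sum>x\<in>vecs p n. indf S x) = real (card S)"
        unfolding indf_def using Ssub by (simp add: sum.If_cases Int_absorb1)
      have "(\<Sum>x\<in>vecs p n. 1 / 2 * indf S x + th) = 1 / 2 * (\<Sum>x\<in>vecs p n. indf S x) + (\<Sum>x\<in>vecs p n. th)"
        by (simp add: sum.distrib sum_distrib_left)
      then show ?thesis unfolding cS N_def by (simp add: card_vecs)
    qed
    finally have "SU \<le> 1 / 2 * real (card S) + N * th" .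
    moreover have "N * th = (eps * N) / 4" "eps / 2 * N = (eps * N) / 2" unfolding th_def by simp_all
    ultimately show ?thesis using SU_big by linarith
  qed
  define k where "k = nat \<lceil>4 * c / eps\<rceil>"
  have x0: "4 * c / eps > 0" using c eps by simp
  have kk: "real k = real_of_int \<lceil>4 * c / eps\<rceil>" unfolding k_def using x0 by simp
  have kc: "real k \<ge> 4 * c / eps" unfolding kk by (rule le_of_int_ceiling)
  have kc2: "real k \<le> 4 * c / eps + 1" unfolding kk by (rule of_int_ceiling_le_add_one)
  have k1: "k \<ge> 1" using kc x0 by linarith
  have ck: "c / real k \<le> eps / 4"
  proof -
    have kpos: "real k > 0" using kc x0 by linarith
    have "c / real k \<le> c / (4 * c / eps)" by (rule divide_left_mono[OF kc]) (use c mult_pos_pos[OF kpos x0] in simp_all)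
    also have "\<dots> = eps / 4" using c by simp
    finally show ?thesis .
  qed
  have LS: "Lambda3 p n (indf S) > th / real p ^ k"
  proof -
    have "Lambda3 p n (indf S) \<ge> (real (card S) / real p ^ n - c / real k) / real p ^ k"
      by (rule varnavides[OF mc k1 Ssub])
    moreover have "real (card S) / real p ^ n - c / real k > th"
    proof -
      have "real (card S) / real p ^ n > eps / 2" using sig N0 unfolding N_def by (simp add: field_simps)
      then show ?thesis using ck unfolding th_def by linarith
    qed
    ultimately show ?thesis using p0 by (smt (verit) divide_strict_right_mono zero_less_power)
  qed
  have Lcf: "Lambda3 p n cf \<ge> th ^ 3 * Lambda3 p n (indf S)"
  proof -
    have pt1: "\<And>x. x \<in> vecs p n \<Longrightarrow> th * indf S x \<le> cf x \<and> 0 \<le> th * indf S x"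
      unfolding indf_def S_def using cf01 th0 by auto
    have "th ^ 3 * Lambda3 p n (indf S) = (\<Sum>m\<in>vecs p n. \<Sum>d\<in>vecs p n.
        (th * indf S m) * (th * indf S (vadd p m d)) * (th * indf S (vadd p m (vadd p d d))))  / real p ^ (2 * n)"
      unfolding Lambda3_def by (simp add: sum_distrib_left power3_eq_cube mult_ac)
    also have "\<dots> \<le> Lambda3 p n cf"
      unfolding Lambda3_def
    proof (rule divide_right_mono[OF sum_mono[OF sum_mono]])
      fix m d assume m: "m \<in> vecs p n" and d: "d \<in> vecs p n"
      have a: "th * indf S m \<le> cf m \<and> 0 \<le> th * indf S m" using pt1 m by blast
      have b: "th * indf S (vadd p m d) \<le> cf (vadd p m d) \<and> 0 \<le> th * indf S (vadd p m d)" using pt1 m d by simp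
      have c': "th * indf S (vadd p m (vadd p d d)) \<le> cf (vadd p m (vadd p d d)) \<and> 0 \<le> th * indf S (vadd p m (vadd p d d))"
        using pt1 m d by simp
      show "th * indf S m * (th * indf S (vadd p m d)) * (th * indf S (vadd p m (vadd p d d)))
          \<le> cf m * cf (vadd p m d) * cf (vadd p m (vadd p d d))"
        using a b c' by (intro mult_mono) (auto intro: mult_nonneg_nonneg)
    qed simp
    finally show ?thesis .
  qed
  define Y where "Y = Lambda3 p n cf"
  have pk: "real p ^ k > 0" using p0 by simp
  have th3: "th ^ 3 > 0" using th0 by simp
  have Ybig: "Y > th ^ 4 / real p ^ k"
  proof -
    have "th ^ 3 * (th / real p ^ k) < th ^ 3 * Lambda3 p n (indf S)"
      by (rule mult_strict_left_mono[OF LS th3])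
    then show ?thesis using Lcf unfolding Y_def by (simp add: power_Suc2 power_numeral_reduce mult_ac)
  qed
  have Y0: "Y \<ge> 0" using Ybig th0 pk by (smt (verit) divide_pos_pos zero_less_power)
  have step1: "pt.Lc * Y \<le> (- 1 / (64 * real p)) * Y" by (rule mult_right_mono[OF Lc_le Y0])
  have step2: "(1 / (64 * real p)) * (th ^ 4 / real p ^ k) < (1 / (64 * real p)) * Y"
    by (rule mult_strict_left_mono[OF Ybig]) (use p0 in simp)
  have step3: "2 * D \<le> (1 / (64 * real p)) * (th ^ 4 / real p ^ k)"
  proof -
    have Xb: "X \<le> real p / real p ^ k" unfolding X_def by (rule powr_bound[OF eps c kc2])
    have "2 * D = 2 * (eps ^ 6 / (2 ^ 13 * real p ^ 2)) * X" unfolding D_def by simp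
    also have "\<dots> \<le> 2 * (eps ^ 6 / (2 ^ 13 * real p ^ 2)) * (real p / real p ^ k)"
      by (rule mult_left_mono[OF Xb]) (use eps p0 in simp)
    also have "\<dots> = eps ^ 6 / (4096 * (real p * real p ^ k))" using p0 by (simp add: power2_eq_square field_simps)
    also have "\<dots> \<le> (eps ^ 4 / 4) / (4096 * (real p * real p ^ k))"
    proof (rule divide_right_mono)
      have "eps ^ 2 \<le> (1/2) ^ 2" by (rule power_mono) (use eps eps_half in auto)
      then have "eps ^ 4 * eps ^ 2 \<le> eps ^ 4 * (1 / 4)" by (intro mult_left_mono) (auto simp: power2_eq_square)
      then show "eps ^ 6 \<le> eps ^ 4 / 4" by (simp add: power_add[symmetric])
    qed (use p0 in simp)
    also have "\<dots> = (1 / (64 * real p)) * (th ^ 4 / real p ^ k)" unfolding th_def using p0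
      by (simp add: field_simps power4_eq_xxxx)
    finally show ?thesis .
  qed
  have "Lambda3 p n g = Lambda3 p n u + pt.Lc * Y" unfolding Y_def by (rule Lg)
  also have "\<dots> \<le> Lambda3 p n f + D + (- 1 / (64 * real p)) * Y" using lamW step1 unfolding u_def by linarith
  also have "\<dots> < Lambda3 p n f + D - 2 * D" using step2 step3 by (simp add: field_simps)
  finally have "Lambda3 p n g < Lambda3 p n f - D" by simp
  then show ?thesis using g01 Eg unfolding D_def X_def by blast
qed

end


theorem theorem3:
  fixes p n :: nat and eps c :: real and f :: "(nat \<Rightarrow> int) \<Rightarrow> real"
  assumes "prime p" and "odd p" and "eps > 0"
    and "c > 0" and "meshulam_const p c"
    and "\<forall>m\<in>vecs p n. 0 \<le> f m \<and> f m \<le> 1"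
    and "\<forall>W. is_subspace p n W \<and>
           real (codim p n W) \<le> 1 / (eps ^ 6 / (2 ^ 13 * real p ^ 2) * exp (- 16 / eps * c * ln (real p))) ^ 2
           \<longrightarrow> expect p n (\<lambda>m. \<bar>f m - favg p W f m\<bar>) > eps"
  shows "\<exists>g :: (nat \<Rightarrow> int) \<Rightarrow> real. (\<forall>m\<in>vecs p n. 0 \<le> g m \<and> g m \<le> 1) \<and>
           expect p n g = expect p n f \<and>
           Lambda3 p n g < Lambda3 p n f - eps ^ 6 / (2 ^ 13 * real p ^ 2) * exp (- 16 / eps * c * ln (real p))"
proof -
  interpret oddp p using assms(1,2) by unfold_locales
  show ?thesis by (rule main[OF assms(3-7)])
qed

end
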